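(* Let $\mathcal X\subset\mathbb R^d$ be compact, let $\mathcal P$ be a set of Borel probability measures on $\mathcal X$ that is compact in the weak* topology, and let $\sigma:\mathbb R\to\mathbb R$ be continuous and not a polynomial. Then for every continuous $f:\mathcal P\to\mathbb R$ and every $\epsilon>0$ there exist $k,m\in\mathbb N$, $W_3\in\mathbb R^{k\times d}$, $b_3\in\mathbb R^k$, $W_2\in\mathbb R^{m\times k}$, $b_2\in\mathbb R^m$, $w_1\in\mathbb R^m$, $b_1\in\mathbb R$ such that $$\sup_{p\in\mathcal P}\Big|f(p)-\Big(w_1^{\mathrm T}\sigma\Big(W_2\int_{\mathcal X}\sigma(W_3x+b_3)\,\mathrm dp(x)+b_2\Big)+b_1\Big)\Big|<\epsilon,$$ where $\sigma$ and the integral are applied componentwise.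
   Context: The weak* topology on Borel probability measures on the compact set $\mathcal X$ is the coarsest topology making every map $p\mapsto\int g\,\mathrm dp$, $g\in C(\mathcal X)$, continuous. (A finite sample $\{x_1,\dots,x_l\}$ corresponds to $p=\frac1l\sum_i\delta_{x_i}$, for which the integral equals the mean $\frac1l\sum_i\sigma(W_3x_i+b_3)$.) *)

theory Defs
  imports "HOL-Probability.Probability" "HOL-Computational_Algebra.Polynomial"
begin

definition borel_prob_measures :: "'a::euclidean_space set \<Rightarrow> 'a measure set" where
  "borel_prob_measures X = {p. prob_space p \<and> sets p = sets (restrict_space borel X)}"

definition weak_star_topology :: "'a::euclidean_space set \<Rightarrow> 'a measure topology" where
  "weak_star_topology X =
     subtopology
       (topology_generated_by
          {{p. (\<integral>x. g x \<partial>p) \<in> U} | g U. continuous_on X g \<and> open (U :: real set)})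
       (borel_prob_measures X)"

definition is_polynomial_fun :: "(real \<Rightarrow> real) \<Rightarrow> bool" where
  "is_polynomial_fun s \<longleftrightarrow> (\<exists>q :: real poly. \<forall>x. s x = poly q x)"

end

theory Submission
  imports Defs
begin


definition net1 :: "(real\<Rightarrow>real) \<Rightarrow> (real\<times>real\<times>real) list \<Rightarrow> real \<Rightarrow> real" where
 "net1 \<sigma> V t = (\<Sum>(v,a,b)\<leftarrow>V. v * \<sigma> (a*t+b))"

definition SS :: "(real\<Rightarrow>real) \<Rightarrow> (real\<Rightarrow>real) set" where
 "SS \<sigma> = {g. \<forall>R>0. \<forall>e>0. \<exists>V. \<forall>t. \<bar>t\<bar> \<le> R \<longrightarrow> \<bar>g t - net1 \<sigma> V t\<bar> < e}"

lemma SS_D: "g \<in> SS \<sigma> \<Longrightarrow> R > 0 \<Longrightarrow> e > 0 \<Longrightarrow> \<exists>V. \<forall>t. \<bar>t\<bar> \<le> R \<longrightarrow> \<bar>g t - net1 \<sigma> V t\<bar> < e"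
  unfolding SS_def by blast

lemma SS_I: "(\<And>R e. R > 0 \<Longrightarrow> e > 0 \<Longrightarrow> \<exists>V. \<forall>t. \<bar>t\<bar> \<le> R \<longrightarrow> \<bar>g t - net1 \<sigma> V t\<bar> < e) \<Longrightarrow> g \<in> SS \<sigma>"
  unfolding SS_def by blast

lemma net1_append: "net1 \<sigma> (V@W) t = net1 \<sigma> V t + net1 \<sigma> W t"
  by (simp add: net1_def)

lemma net1_scale: "net1 \<sigma> (map (\<lambda>(v,a,b). (c * v,a,b)) V) t = c * net1 \<sigma> V t"
  by (induction V) (auto simp: net1_def algebra_simps)

lemma net1_affine: "net1 \<sigma> (map (\<lambda>(v,a,b). (v, a*w, a*c+b)) V) t = net1 \<sigma> V (w*t+c)"
  by (induction V) (auto simp: net1_def algebra_simps)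

lemma SS_closure:
  assumes "\<And>R e. R > 0 \<Longrightarrow> e > 0 \<Longrightarrow> \<exists>h\<in>SS \<sigma>. \<forall>t. \<bar>t\<bar> \<le> R \<longrightarrow> \<bar>g t - h t\<bar> < e"
  shows "g \<in> SS \<sigma>"
proof (rule SS_I)
  fix R e :: real assume R: "R > 0" and e: "e > 0"
  have e2: "e/2 > 0" using e by simp
  obtain h where h1: "h \<in> SS \<sigma>" and h2: "\<forall>t. \<bar>t\<bar> \<le> R \<longrightarrow> \<bar>g t - h t\<bar> < e/2"
    using assms[OF R e2] by blast
  obtain V where V: "\<forall>t. \<bar>t\<bar> \<le> R \<longrightarrow> \<bar>h t - net1 \<sigma> V t\<bar> < e/2"
    using SS_D[OF h1 R e2] by blast
  show "\<exists>V. \<forall>t. \<bar>t\<bar> \<le> R \<longrightarrow> \<bar>g t - net1 \<sigma> V t\<bar> < e"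
  proof (intro exI allI impI)
    fix t :: real assume t: "\<bar>t\<bar> \<le> R"
    have "\<bar>g t - h t\<bar> < e/2" using h2 t by blast
    moreover have "\<bar>h t - net1 \<sigma> V t\<bar> < e/2" using V t by blast
    ultimately show "\<bar>g t - net1 \<sigma> V t\<bar> < e" by linarith
  qed
qed


lemma SS_add:
  assumes "g \<in> SS \<sigma>" "h \<in> SS \<sigma>"
  shows "(\<lambda>t. g t + h t) \<in> SS \<sigma>"
proof (rule SS_I)
  fix R e :: real assume R: "R > 0" and e: "e > 0"
  have e2: "e/2 > 0" using e by simp
  obtain V where V: "\<forall>t. \<bar>t\<bar> \<le> R \<longrightarrow> \<bar>g t - net1 \<sigma> V t\<bar> < e/2"
    using SS_D[OF assms(1) R e2] by blast
  obtain W where W: "\<forall>t. \<bar>t\<bar> \<le> R \<longrightarrow> \<bar>h t - net1 \<sigma> W t\<bar> < e/2"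
    using SS_D[OF assms(2) R e2] by blast
  show "\<exists>V. \<forall>t. \<bar>t\<bar> \<le> R \<longrightarrow> \<bar>g t + h t - net1 \<sigma> V t\<bar> < e"
  proof (intro exI[of _ "V@W"] allI impI)
    fix t :: real assume t: "\<bar>t\<bar> \<le> R"
    have "\<bar>g t - net1 \<sigma> V t\<bar> < e/2" using V t by blast
    moreover have "\<bar>h t - net1 \<sigma> W t\<bar> < e/2" using W t by blast
    ultimately show "\<bar>g t + h t - net1 \<sigma> (V@W) t\<bar> < e" unfolding net1_append by linarith
  qed
qed

lemma SS_scale:
  assumes "g \<in> SS \<sigma>"
  shows "(\<lambda>t. c * g t) \<in> SS \<sigma>"
proof (rule SS_I)
  fix R e :: real assume R: "R > 0" and e: "e > 0"
  have e2: "e/(\<bar>c\<bar>+1) > 0" using e by (simp add: add_nonneg_pos)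
  obtain V where V: "\<forall>t. \<bar>t\<bar> \<le> R \<longrightarrow> \<bar>g t - net1 \<sigma> V t\<bar> < e/(\<bar>c\<bar>+1)"
    using SS_D[OF assms(1) R e2] by blast
  show "\<exists>V. \<forall>t. \<bar>t\<bar> \<le> R \<longrightarrow> \<bar>c * g t - net1 \<sigma> V t\<bar> < e"
  proof (intro exI[of _ "map (\<lambda>(v,a,b). (c * v,a,b)) V"] allI impI)
    fix t :: real assume t: "\<bar>t\<bar> \<le> R"
    have "\<bar>c * g t - net1 \<sigma> (map (\<lambda>(v,a,b). (c * v,a,b)) V) t\<bar> = \<bar>c\<bar> * \<bar>g t - net1 \<sigma> V t\<bar>"
      unfolding net1_scale by (simp add: abs_mult[symmetric] right_diff_distrib)
    also have "\<dots> \<le> \<bar>c\<bar> * (e/(\<bar>c\<bar>+1))" using V t by (intro mult_left_mono) auto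
    also have "\<dots> < e" using e by (simp add: field_simps)
    finally show "\<bar>c * g t - net1 \<sigma> (map (\<lambda>(v,a,b). (c * v,a,b)) V) t\<bar> < e" .
  qed
qed

lemma SS_affine:
  assumes "g \<in> SS \<sigma>"
  shows "(\<lambda>t. g (w*t+c)) \<in> SS \<sigma>"
proof (rule SS_I)
  fix R e :: real assume R: "R > 0" and e: "e > 0"
  define R' where "R' = \<bar>w\<bar>*R + \<bar>c\<bar> + 1"
  have R': "R' > 0" unfolding R'_def using R mult_nonneg_nonneg[of "\<bar>w\<bar>" R] by linarith
  obtain V where V: "\<forall>t. \<bar>t\<bar> \<le> R' \<longrightarrow> \<bar>g t - net1 \<sigma> V t\<bar> < e"
    using SS_D[OF assms(1) R' e] by blast
  show "\<exists>V. \<forall>t. \<bar>t\<bar> \<le> R \<longrightarrow> \<bar>g (w*t+c) - net1 \<sigma> V t\<bar> < e"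
  proof (intro exI[of _ "map (\<lambda>(v,a,b). (v, a*w, a*c+b)) V"] allI impI)
    fix t :: real assume t: "\<bar>t\<bar> \<le> R"
    have "\<bar>w*t+c\<bar> \<le> \<bar>w*t\<bar> + \<bar>c\<bar>" by (rule abs_triangle_ineq)
    also have "\<bar>w*t\<bar> = \<bar>w\<bar>*\<bar>t\<bar>" by (rule abs_mult)
    also have "\<bar>w\<bar>*\<bar>t\<bar> + \<bar>c\<bar> \<le> R'" unfolding R'_def using mult_left_mono[OF t, of "\<bar>w\<bar>"] by linarith
    finally have bnd: "\<bar>w*t+c\<bar> \<le> R'" .
    have "\<bar>g (w*t+c) - net1 \<sigma> V (w*t+c)\<bar> < e"
      using V bnd by blast
    then show "\<bar>g (w*t+c) - net1 \<sigma> (map (\<lambda>(v,a,b). (v, a*w, a*c+b)) V) t\<bar> < e"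
      by (simp only: net1_affine)
  qed
qed

lemma SS_sigma: "\<sigma> \<in> SS \<sigma>"
proof (rule SS_I)
  fix R e :: real assume "R > 0" "e > 0"
  then show "\<exists>V. \<forall>t. \<bar>t\<bar> \<le> R \<longrightarrow> \<bar>\<sigma> t - net1 \<sigma> V t\<bar> < e"
    by (intro exI[of _ "[(1,1,0)]"]) (simp add: net1_def)
qed

lemma SS_zero: "(\<lambda>t. 0) \<in> SS \<sigma>"
proof (rule SS_I)
  fix R e :: real assume "R > 0" "e > 0"
  then show "\<exists>V. \<forall>t. \<bar>t\<bar> \<le> R \<longrightarrow> \<bar>0 - net1 \<sigma> V t\<bar> < e"
    by (intro exI[of _ "[]"]) (simp add: net1_def)
qed

lemma SS_eq: "g \<in> SS \<sigma> \<Longrightarrow> (\<And>t. g t = h t) \<Longrightarrow> h \<in> SS \<sigma>"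
proof -
  assume "g \<in> SS \<sigma>" "\<And>t. g t = h t"
  then have "g = h" by auto
  then show "h \<in> SS \<sigma>" using \<open>g \<in> SS \<sigma>\<close> by simp
qed

lemma SS_diff:
  assumes "g \<in> SS \<sigma>" "h \<in> SS \<sigma>"
  shows "(\<lambda>t. g t - h t) \<in> SS \<sigma>"
  by (rule SS_eq[OF SS_add[OF assms(1) SS_scale[OF assms(2), of "-1"]]]) simp

lemma SS_sum:
  assumes "\<And>i. i \<in> A \<Longrightarrow> f i \<in> SS \<sigma>"
  shows "(\<lambda>t. \<Sum>i\<in>A. f i t) \<in> SS \<sigma>"
  using assms
proof (induction A rule: infinite_finite_induct)
  case (infinite A) then show ?case using SS_zero by simp
next
  case empty then show ?case using SS_zero by simp
next
  case (insert x F)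
  have "(\<lambda>t. f x t + (\<Sum>i\<in>F. f i t)) \<in> SS \<sigma>"
    by (rule SS_add) (use insert in auto)
  then show ?case using insert(1,2) by simp
qed


lemma mvt_sym:
  fixes g g' :: "real \<Rightarrow> real"
  assumes "\<And>x. (g has_real_derivative g' x) (at x)"
  shows "\<exists>\<xi>. \<bar>\<xi> - x\<bar> \<le> \<bar>y - x\<bar> \<and> g y - g x = (y - x) * g' \<xi>"
proof (cases x y rule: linorder_cases)
  case less
  then obtain z where "x < z" "z < y" "g y - g x = (y - x) * g' z"
    using MVT2[of x y g g'] assms by blast
  then show ?thesis by (intro exI[of _ z]) auto
next
  case equal then show ?thesis by auto
next
  case greater
  then obtain z where "y < z" "z < x" "g x - g y = (x - y) * g' z"
    using MVT2[of y x g g'] assms by blast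
  then show ?thesis by (intro exI[of _ z]) (auto simp: algebra_simps)
qed

lemma unif_cont_real:
  fixes f :: "real \<Rightarrow> real"
  assumes "continuous_on UNIV f" "e > 0"
  shows "\<exists>d>0. \<forall>x y. \<bar>x\<bar> \<le> R \<longrightarrow> \<bar>y\<bar> \<le> R \<longrightarrow> \<bar>y - x\<bar> < d \<longrightarrow> \<bar>f y - f x\<bar> < e"
proof -
  have "uniformly_continuous_on {-R..R} f"
    by (rule compact_uniformly_continuous) (auto intro: continuous_on_subset[OF assms(1)])
  then obtain d where d: "d > 0" "\<forall>x\<in>{-R..R}. \<forall>x'\<in>{-R..R}. dist x' x < d \<longrightarrow> dist (f x') (f x) < e"
    using assms(2) unfolding uniformly_continuous_on_def by metis
  show ?thesis
  proof (intro exI[of _ d] conjI allI impI)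
    fix x y :: real assume "\<bar>x\<bar> \<le> R" "\<bar>y\<bar> \<le> R" "\<bar>y - x\<bar> < d"
    then show "\<bar>f y - f x\<bar> < e" using d(2) by (auto simp: dist_real_def abs_le_iff)
  qed (use d in auto)
qed

lemma aux_frac: "(P::real) \<ge> 0 \<Longrightarrow> e > 0 \<Longrightarrow> P * (e/(P+1)) < e"
  by (simp add: field_simps)

lemma SS_deriv_step:
  fixes g g' :: "real \<Rightarrow> real"
  assumes g: "\<And>x. (g has_real_derivative g' x) (at x)" and g'c: "continuous_on UNIV g'"
    and S: "\<And>w b. (\<lambda>t. t^j * g (w*t+b)) \<in> SS \<sigma>"
  shows "(\<lambda>t. t^(Suc j) * g' (w*t+b)) \<in> SS \<sigma>"
proof (rule SS_closure)
  fix R e :: real assume R: "R > 0" and e: "e > 0"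
  define R1 where "R1 = (\<bar>w\<bar>+1)*R + \<bar>b\<bar>"
  define e1 where "e1 = e / (R^(Suc j) + 1)"
  have e1: "e1 > 0" unfolding e1_def using e R by (simp add: add_pos_pos)
  obtain d where d: "d > 0" and dd: "\<forall>x y. \<bar>x\<bar> \<le> R1 \<longrightarrow> \<bar>y\<bar> \<le> R1 \<longrightarrow> \<bar>y - x\<bar> < d \<longrightarrow> \<bar>g' y - g' x\<bar> < e1"
    using unif_cont_real[OF g'c e1, of R1] by blast
  define \<delta> where "\<delta> = min 1 (d / (2*(R+1)))"
  have \<delta>: "\<delta> > 0" "\<delta> \<le> 1" "\<delta> * R < d"
  proof -
    show "\<delta> > 0" unfolding \<delta>_def using d R by simp
    show "\<delta> \<le> 1" unfolding \<delta>_def by simp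
    have "\<delta> * R \<le> (d / (2*(R+1))) * R" unfolding \<delta>_def using R by (intro mult_right_mono) auto
    also have "\<dots> < d" using d R by (simp add: field_simps add_pos_pos)
    finally show "\<delta> * R < d" .
  qed
  define h where "h t = (1/\<delta>) * (t^j * g ((w+\<delta>)*t+b) - t^j * g (w*t+b))" for t
  have hS: "h \<in> SS \<sigma>"
    unfolding h_def by (intro SS_scale SS_diff S)
  have "\<forall>t. \<bar>t\<bar> \<le> R \<longrightarrow> \<bar>t^(Suc j) * g' (w*t+b) - h t\<bar> < e"
  proof (intro allI impI)
    fix t :: real assume t: "\<bar>t\<bar> \<le> R"
    define x where "x = w*t+b"
    define y where "y = (w+\<delta>)*t+b"
    obtain \<xi> where \<xi>: "\<bar>\<xi> - x\<bar> \<le> \<bar>y - x\<bar>" "g y - g x = (y - x) * g' \<xi>"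
      using mvt_sym[OF g] by blast
    have yx: "y - x = \<delta> * t" unfolding x_def y_def by (simp add: algebra_simps)
    have "h t = (1/\<delta>) * (t^j * (g y - g x))" unfolding h_def x_def y_def by (simp only: right_diff_distrib)
    also have "\<dots> = (1/\<delta>) * (t^j * (\<delta> * t * g' \<xi>))" using \<xi>(2) yx by simp
    also have "\<dots> = t^(Suc j) * g' \<xi>" using \<delta>(1) by (simp add: field_simps)
    finally have ht: "h t = t^(Suc j) * g' \<xi>" .
    have absx: "\<bar>x\<bar> \<le> \<bar>w\<bar>*R + \<bar>b\<bar>"
    proof -
      have "\<bar>x\<bar> \<le> \<bar>w*t\<bar> + \<bar>b\<bar>" unfolding x_def by (rule abs_triangle_ineq)
      also have "\<bar>w*t\<bar> = \<bar>w\<bar>*\<bar>t\<bar>" by (rule abs_mult)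
      finally show ?thesis using mult_left_mono[OF t, of "\<bar>w\<bar>"] by linarith
    qed
    have dyx: "\<bar>y - x\<bar> \<le> \<delta> * R" unfolding yx using \<delta> t by (simp add: abs_mult mult_left_mono)
    have "\<bar>\<xi>\<bar> \<le> R1"
    proof -
      have "\<bar>\<xi>\<bar> \<le> \<bar>x\<bar> + \<bar>\<xi> - x\<bar>" by linarith
      also have "\<dots> \<le> \<bar>w\<bar>*R + \<bar>b\<bar> + \<delta> * R" using absx \<xi>(1) dyx by linarith
      also have "\<delta> * R \<le> R" using \<delta>(2) R by simp
      finally show ?thesis unfolding R1_def by (simp add: algebra_simps)
    qed
    moreover have "\<bar>x\<bar> \<le> R1" using absx R unfolding R1_def by (simp add: algebra_simps)
    moreover have "\<bar>\<xi> - x\<bar> < d" using \<xi>(1) dyx \<delta>(3) by linarith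
    ultimately have gd: "\<bar>g' x - g' \<xi>\<bar> < e1" using dd by (metis abs_minus_commute)
    have "\<bar>t^(Suc j) * g' (w*t+b) - h t\<bar> = \<bar>t\<bar>^(Suc j) * \<bar>g' x - g' \<xi>\<bar>"
      unfolding ht x_def by (simp add: abs_mult power_abs right_diff_distrib[symmetric])
    also have "\<dots> \<le> R^(Suc j) * e1"
      using gd t by (intro mult_mono power_mono) auto
    also have "\<dots> < e" unfolding e1_def using e R by (intro aux_frac) auto
    finally show "\<bar>t^(Suc j) * g' (w*t+b) - h t\<bar> < e" .
  qed
  then show "\<exists>h\<in>SS \<sigma>. \<forall>t. \<bar>t\<bar> \<le> R \<longrightarrow> \<bar>t^(Suc j) * g' (w*t+b) - h t\<bar> < e"
    using hS by blast
qed

lemma integrable_cont_real: "continuous_on UNIV (u::real\<Rightarrow>real) \<Longrightarrow> u integrable_on {a..b}"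
  by (meson continuous_on_subset integrable_continuous_real subset_UNIV)

lemma antider_exists:
  fixes u :: "real \<Rightarrow> real"
  assumes u: "continuous_on UNIV u"
  shows "\<exists>F. \<forall>x. (F has_real_derivative u x) (at x)"
proof -
  define F where "F y = (if 0 \<le> y then integral {0..y} u else - integral {y..0} u)" for y
  have key: "F y = integral {c..y} u - integral {c..0} u" if "c \<le> y" "c \<le> 0" for c y
  proof (cases "0 \<le> y")
    case True
    have "integral {c..0} u + integral {0..y} u = integral {c..y} u"
      using Henstock_Kurzweil_Integration.integral_combine[where a=c and c=0 and b=y and f=u] that integrable_cont_real[OF u] True by blast
    then show ?thesis using True by (simp add: F_def)
  next
    case False
    have "integral {c..y} u + integral {y..0} u = integral {c..0} u"
      using Henstock_Kurzweil_Integration.integral_combine[where a=c and c=y and b=0 and f=u] that integrable_cont_real[OF u] False by auto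
    then show ?thesis using False by (simp add: F_def)
  qed
  have "(F has_real_derivative u x) (at x)" for x
  proof -
    define c where "c = - (\<bar>x\<bar> + 1)"
    have cx: "c < x" "c \<le> 0" unfolding c_def by auto
    have "((\<lambda>y. integral {c..y} u) has_real_derivative u x) (at x within {c..x+1})"
      by (rule integral_has_real_derivative) (use cx in \<open>auto intro: continuous_on_subset[OF u]\<close>)
    moreover have "x \<in> interior {c..x+1}" using cx by simp
    ultimately have "((\<lambda>y. integral {c..y} u) has_real_derivative u x) (at x)"
      by (metis at_within_interior)
    then have "((\<lambda>y. integral {c..y} u - integral {c..0} u) has_real_derivative u x) (at x)"
      by (auto intro: derivative_eq_intros)
    then show ?thesis
      by (rule has_field_derivative_transform_within_open[where S="{c<..}"]) (use cx in \<open>auto intro!: key[symmetric]\<close>)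
  qed
  then show ?thesis by blast
qed


lemma SS_deriv_iter:
  fixes D :: "nat \<Rightarrow> real \<Rightarrow> real"
  assumes D: "\<And>j x. j < k \<Longrightarrow> (D j has_real_derivative D (Suc j) x) (at x)"
    and Dc: "\<And>j. j \<le> k \<Longrightarrow> continuous_on UNIV (D j)"
    and S0: "\<And>w b. (\<lambda>t. D 0 (w*t+b)) \<in> SS \<sigma>"
  shows "j \<le> k \<Longrightarrow> (\<lambda>t. t^j * D j (w*t+b)) \<in> SS \<sigma>"
proof (induction j arbitrary: w b)
  case 0 then show ?case using S0 by simp
next
  case (Suc j)
  show ?case
    by (rule SS_deriv_step[where g="D j"]) (use Suc D Dc in auto)
qed

lemma SS_monomial_from_chain:
  fixes D :: "nat \<Rightarrow> real \<Rightarrow> real"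
  assumes D: "\<And>j x. j < k \<Longrightarrow> (D j has_real_derivative D (Suc j) x) (at x)"
    and Dc: "\<And>j. j \<le> k \<Longrightarrow> continuous_on UNIV (D j)"
    and S0: "\<And>w b. (\<lambda>t. D 0 (w*t+b)) \<in> SS \<sigma>"
    and nz: "D k b \<noteq> 0"
  shows "(\<lambda>t. t^k) \<in> SS \<sigma>"
proof -
  have "(\<lambda>t. t^k * D k (0*t+b)) \<in> SS \<sigma>"
    by (rule SS_deriv_iter[OF D Dc S0]) auto
  then have "(\<lambda>t. (1 / D k b) * (t^k * D k (0*t+b))) \<in> SS \<sigma>" by (rule SS_scale)
  then show ?thesis by (rule SS_eq) (use nz in simp)
qed

definition antider :: "(real \<Rightarrow> real) \<Rightarrow> real \<Rightarrow> real" where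
  "antider u = (SOME F. \<forall>x. (F has_real_derivative u x) (at x))"

definition Av :: "real \<Rightarrow> (real \<Rightarrow> real) \<Rightarrow> real \<Rightarrow> real" where
  "Av h u t = antider u (t+h) - antider u t"

definition Df :: "real \<Rightarrow> (real \<Rightarrow> real) \<Rightarrow> real \<Rightarrow> real" where
  "Df h u t = u (t+h) - u t"

lemma antider_deriv:
  assumes "continuous_on UNIV u"
  shows "(antider u has_real_derivative u x) (at x)"
proof -
  have "\<forall>x. (antider u has_real_derivative u x) (at x)"
    unfolding antider_def by (rule someI_ex[OF antider_exists[OF assms]])
  then show ?thesis by blast
qed

lemma Av_eq:
  assumes u: "continuous_on UNIV u" and G: "\<And>x. (G has_real_derivative u x) (at x)"
  shows "Av h u t = G (t+h) - G t"
proof -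
  have "\<And>x. ((\<lambda>x. antider u x - G x) has_real_derivative 0) (at x)"
    using antider_deriv[OF u] G by (metis (no_types) DERIV_diff diff_self)
  then have "antider u (t+h) - G (t+h) = antider u t - G t"
    using DERIV_isconst_all[of "\<lambda>x. antider u x - G x" "t+h" t] by blast
  then show ?thesis unfolding Av_def by simp
qed

lemma Av_deriv:
  assumes u: "continuous_on UNIV u"
  shows "(Av h u has_real_derivative Df h u x) (at x)"
proof -
  have "((\<lambda>t. antider u (t+h)) has_real_derivative u (x+h)) (at x)"
  proof -
    have "((\<lambda>t. t+h) has_real_derivative 1) (at x)" by (auto intro!: derivative_eq_intros)
    from DERIV_chain2[OF antider_deriv[OF u] this] show ?thesis by simp
  qed
  then have "((\<lambda>t. antider u (t+h) - antider u t) has_real_derivative u (x+h) - u x) (at x)"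
    by (intro DERIV_diff antider_deriv[OF u])
  then show ?thesis unfolding Av_def[abs_def] Df_def .
qed

lemma Av_cont:
  assumes u: "continuous_on UNIV u"
  shows "continuous_on UNIV (Av h u)"
  by (rule continuous_at_imp_continuous_on) (use DERIV_isCont[OF Av_deriv[OF u]] in blast)

lemma Df_cont:
  assumes u: "continuous_on UNIV u"
  shows "continuous_on UNIV (Df h u)"
  unfolding Df_def[abs_def]
  by (intro continuous_intros continuous_on_compose2[OF u]) auto

lemma Av_Df:
  assumes u: "continuous_on UNIV u"
  shows "Av h (Df h u) = Df h (Av h u)"
proof
  fix t
  have "Av h (Df h u) t = (antider u (t+h+h) - antider u (t+h)) - (antider u (t+h) - antider u t)"
  proof (rule Av_eq[OF Df_cont[OF u]])
    fix x
    show "((\<lambda>x. antider u (x+h) - antider u x) has_real_derivative Df h u x) (at x)"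
      using Av_deriv[OF u, of h x] unfolding Av_def[abs_def] .
  qed
  then show "Av h (Df h u) t = Df h (Av h u) t"
    unfolding Df_def[of h "Av h u"] Av_def by (simp add: algebra_simps)
qed

lemma Avn_cont:
  assumes u: "continuous_on UNIV u"
  shows "continuous_on UNIV ((Av h ^^ n) u)"
  by (induction n) (auto simp: u Av_cont)

lemma Dfn_cont:
  assumes u: "continuous_on UNIV u"
  shows "continuous_on UNIV ((Df h ^^ n) u)"
  by (induction n) (auto simp: u Df_cont)

lemma Df_Avn:
  assumes u: "continuous_on UNIV u"
  shows "Df h ((Av h ^^ n) u) = (Av h ^^ n) (Df h u)"
proof (induction n)
  case 0 then show ?case by simp
next
  case (Suc n)
  have "Df h ((Av h ^^ Suc n) u) = Df h (Av h ((Av h ^^ n) u))" by simp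
  also have "\<dots> = Av h (Df h ((Av h ^^ n) u))" using Av_Df[OF Avn_cont[OF u]] by simp
  also have "\<dots> = (Av h ^^ Suc n) (Df h u)" using Suc by simp
  finally show ?case .
qed

definition chainD :: "real \<Rightarrow> nat \<Rightarrow> (real \<Rightarrow> real) \<Rightarrow> nat \<Rightarrow> real \<Rightarrow> real" where
  "chainD h k u j = (Av h ^^ (k - j)) ((Df h ^^ j) u)"

lemma chainD_deriv:
  assumes u: "continuous_on UNIV u" and j: "j < k"
  shows "(chainD h k u j has_real_derivative chainD h k u (Suc j) x) (at x)"
proof -
  have kj: "k - j = Suc (k - Suc j)" using j by simp
  have "chainD h k u j = Av h ((Av h ^^ (k - Suc j)) ((Df h ^^ j) u))"
    unfolding chainD_def kj by simp
  moreover have "Df h ((Av h ^^ (k - Suc j)) ((Df h ^^ j) u)) = chainD h k u (Suc j)"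
    unfolding chainD_def Df_Avn[OF Dfn_cont[OF u]] by simp
  moreover have c: "continuous_on UNIV ((Av h ^^ (k - Suc j)) ((Df h ^^ j) u))"
    by (intro Avn_cont Dfn_cont u)
  ultimately show ?thesis
    using Av_deriv[OF c, where h=h and x=x] by simp
qed

lemma chainD_cont:
  assumes u: "continuous_on UNIV u"
  shows "continuous_on UNIV (chainD h k u j)"
  unfolding chainD_def by (intro Avn_cont Dfn_cont u)

lemma chainD_0: "chainD h k u 0 = (Av h ^^ k) u"
  unfolding chainD_def by simp

lemma chainD_k: "chainD h k u k = (Df h ^^ k) u"
  unfolding chainD_def by simp


lemma antider_step:
  assumes u: "continuous_on UNIV u" and d: "\<delta> > 0"
  shows "\<exists>\<xi>. s \<le> \<xi> \<and> \<xi> \<le> s+\<delta> \<and> antider u (s+\<delta>) - antider u s = \<delta> * u \<xi>"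
proof -
  obtain z where "s < z" "z < s+\<delta>" "antider u (s+\<delta>) - antider u s = (s+\<delta> - s) * u z"
    using MVT2[of s "s+\<delta>" "antider u" u] antider_deriv[OF u] d by auto
  then show ?thesis by (intro exI[of _ z]) auto
qed

lemma Df_SS:
  assumes "u \<in> SS \<sigma>"
  shows "Df h u \<in> SS \<sigma>"
proof -
  have "(\<lambda>t. u (1*t+h) - u t) \<in> SS \<sigma>" by (intro SS_diff SS_affine assms)
  then show ?thesis by (rule SS_eq) (simp add: Df_def)
qed

lemma Av_SS:
  assumes uS: "u \<in> SS \<sigma>" and u: "continuous_on UNIV u" and h: "h > 0"
  shows "Av h u \<in> SS \<sigma>"
proof (rule SS_closure)
  fix R e :: real assume R: "R > 0" and e: "e > 0"
  define e1 where "e1 = e / (2*h)"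
  have e1: "e1 > 0" unfolding e1_def using e h by simp
  obtain d where d: "d > 0" and dd: "\<forall>x y. \<bar>x\<bar> \<le> R+h \<longrightarrow> \<bar>y\<bar> \<le> R+h \<longrightarrow> \<bar>y - x\<bar> < d \<longrightarrow> \<bar>u y - u x\<bar> < e1"
    using unif_cont_real[OF u e1, of "R+h"] by blast
  obtain n :: nat where n: "h/d < real n" using reals_Archimedean2 by blast
  have hd: "h/d > 0" using h d by simp
  have npos: "real n > 0" using n hd by linarith
  define \<delta> where "\<delta> = h / real n"
  have \<delta>: "\<delta> > 0" "\<delta> < d" "real n * \<delta> = h"
  proof -
    show "\<delta> > 0" unfolding \<delta>_def using h npos by simp
    show "real n * \<delta> = h" unfolding \<delta>_def using npos by simp
    have "h < d * real n" using n d by (simp add: field_simps)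
    then show "\<delta> < d" unfolding \<delta>_def using npos by (simp add: field_simps)
  qed
  define RS where "RS t = (\<Sum>i\<in>{..<n}. \<delta> * u (1*t + real i * \<delta>))" for t
  have RS: "RS \<in> SS \<sigma>"
  proof -
    have "(\<lambda>t. \<Sum>i\<in>{..<n}. \<delta> * u (1*t + real i * \<delta>)) \<in> SS \<sigma>"
      by (intro SS_sum SS_scale SS_affine uS)
    then show ?thesis unfolding RS_def[abs_def] .
  qed
  have "\<forall>t. \<bar>t\<bar> \<le> R \<longrightarrow> \<bar>Av h u t - RS t\<bar> < e"
  proof (intro allI impI)
    fix t :: real assume t: "\<bar>t\<bar> \<le> R"
    define F where "F = antider u"
    define f where "f i = F (t + real i * \<delta>)" for i :: nat
    have "Av h u t = f n - f 0" unfolding Av_def f_def F_def using \<delta>(3) by (simp add: algebra_simps)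
    also have "\<dots> = (\<Sum>i<n. f (Suc i) - f i)" by (rule sum_lessThan_telescope[symmetric])
    finally have Aeq: "Av h u t = (\<Sum>i<n. f (Suc i) - f i)" .
    have termb: "\<bar>(f (Suc i) - f i) - \<delta> * u (1*t + real i * \<delta>)\<bar> \<le> \<delta> * e1" if i: "i < n" for i
    proof -
      obtain \<xi> where \<xi>: "t + real i * \<delta> \<le> \<xi>" "\<xi> \<le> t + real i * \<delta> + \<delta>"
        "F (t + real i * \<delta> + \<delta>) - F (t + real i * \<delta>) = \<delta> * u \<xi>"
        using antider_step[OF u \<delta>(1), of "t + real i * \<delta>"] unfolding F_def by blast
      have fS: "f (Suc i) - f i = \<delta> * u \<xi>" using \<xi>(3) unfolding f_def by (simp add: algebra_simps)
      have nn: "real i * \<delta> \<ge> 0" using \<delta> by simp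
      have hb: "real i * \<delta> + \<delta> \<le> h"
      proof -
        have "real (Suc i) \<le> real n" using i by simp
        then have "real (Suc i) * \<delta> \<le> real n * \<delta>" using \<delta>(1) by (intro mult_right_mono) auto
        then show ?thesis using \<delta>(3) by (simp add: algebra_simps)
      qed
      have b1: "\<bar>t + real i * \<delta>\<bar> \<le> R + h" and b2: "\<bar>\<xi>\<bar> \<le> R + h"
        using t[unfolded abs_le_iff] \<xi>(1,2) nn hb h \<delta>(1) unfolding abs_le_iff by linarith+
      have b3: "\<bar>\<xi> - (t + real i * \<delta>)\<bar> < d" using \<xi>(1,2) \<delta>(2) by (simp add: abs_le_iff)
      have "\<bar>u \<xi> - u (t + real i * \<delta>)\<bar> < e1" using dd b1 b2 b3 by blast
      then have "\<bar>\<delta> * u \<xi> - \<delta> * u (t + real i * \<delta>)\<bar> \<le> \<delta> * e1"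
        using \<delta>(1) by (simp add: abs_mult right_diff_distrib[symmetric])
      then show ?thesis using fS by simp
    qed
    have "\<bar>Av h u t - RS t\<bar> = \<bar>\<Sum>i<n. (f (Suc i) - f i) - \<delta> * u (1*t + real i * \<delta>)\<bar>"
      unfolding Aeq RS_def by (simp add: sum_subtractf)
    also have "\<dots> \<le> (\<Sum>i<n. \<bar>(f (Suc i) - f i) - \<delta> * u (1*t + real i * \<delta>)\<bar>)" by (rule sum_abs)
    also have "\<dots> \<le> (\<Sum>i<n. \<delta> * e1)" by (rule sum_mono) (use termb in auto)
    also have "\<dots> = h * e1" using \<delta>(3) by simp
    also have "\<dots> < e" unfolding e1_def using h e by simp
    finally show "\<bar>Av h u t - RS t\<bar> < e" .
  qed
  then show "\<exists>g\<in>SS \<sigma>. \<forall>t. \<bar>t\<bar> \<le> R \<longrightarrow> \<bar>Av h u t - g t\<bar> < e" using RS by blast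
qed

lemma Avn_SS:
  assumes uS: "u \<in> SS \<sigma>" and u: "continuous_on UNIV u" and h: "h > 0"
  shows "(Av h ^^ n) u \<in> SS \<sigma>"
  by (induction n) (auto intro!: Av_SS Avn_cont u h uS)

lemma pderiv_sum_gen: "pderiv (\<Sum>i\<in>A. f i) = (\<Sum>i\<in>A. pderiv (f i))"
  using higher_pderiv_sum[of 1 f A] by simp

lemma poly_antideriv:
  fixes p :: "real poly"
  shows "\<exists>P. pderiv P = p \<and> degree P \<le> Suc (degree p)"
proof -
  define P where "P = (\<Sum>i\<le>degree p. monom (coeff p i / real (Suc i)) (Suc i))"
  have "pderiv P = (\<Sum>i\<le>degree p. monom (coeff p i) i)"
    unfolding P_def pderiv_sum_gen pderiv_monom
    by (intro sum.cong refl) (simp del: of_nat_Suc)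
  also have "\<dots> = p" by (rule poly_as_sum_of_monoms)
  finally have "pderiv P = p" .
  moreover have "degree P \<le> Suc (degree p)"
    unfolding P_def by (intro degree_sum_le) (auto intro: order_trans[OF degree_monom_le])
  ultimately show ?thesis by blast
qed

lemma deriv_chain_poly:
  fixes D :: "nat \<Rightarrow> real \<Rightarrow> real"
  assumes "\<And>j x. j < k \<Longrightarrow> (D j has_real_derivative D (Suc j) x) (at x)"
    and "\<And>x. D k x = 0"
  shows "\<exists>p. degree p \<le> k \<and> (\<forall>x. D 0 x = poly p x)"
  using assms
proof (induction k arbitrary: D)
  case 0
  then show ?case by (intro exI[of _ 0]) auto
next
  case (Suc k)
  obtain p where p: "degree p \<le> k" "\<And>x. D (Suc 0) x = poly p x"
    using Suc.IH[of "\<lambda>j. D (Suc j)"] Suc.prems by auto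
  obtain P where P: "pderiv P = p" "degree P \<le> Suc (degree p)" using poly_antideriv by blast
  have "\<And>x. ((\<lambda>x. D 0 x - poly P x) has_real_derivative 0) (at x)"
  proof -
    fix x
    have "(D 0 has_real_derivative poly p x) (at x)" using Suc.prems(1)[of 0 x] p(2) by simp
    moreover have "(poly P has_real_derivative poly p x) (at x)" using poly_DERIV[of P x] P(1) by simp
    ultimately show "((\<lambda>x. D 0 x - poly P x) has_real_derivative 0) (at x)"
      using DERIV_diff by fastforce
  qed
  then have c: "\<And>x. D 0 x - poly P x = D 0 0 - poly P 0"
    using DERIV_isconst_all by blast
  show ?case
  proof (intro exI[of _ "P + [:D 0 0 - poly P 0:]"] conjI allI)
    show "degree (P + [:D 0 0 - poly P 0:]) \<le> Suc k"
      using P(2) p(1) degree_add_le[of P "Suc k" "[:D 0 0 - poly P 0:]"] by simp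
    fix x show "D 0 x = poly (P + [:D 0 0 - poly P 0:]) x" using c[of x] by simp
  qed
qed

definition lagr :: "nat \<Rightarrow> nat \<Rightarrow> real poly" where
  "lagr k i = smult (1 / (\<Prod>j\<in>{0..k}-{i}. (real i - real j))) (\<Prod>j\<in>{0..k}-{i}. [:- real j, 1:])"

lemma lagr_degree: assumes ik: "i \<le> k" shows "degree (lagr k i) \<le> k"
proof -
  have "degree (\<Prod>j\<in>{0..k}-{i}. [:- real j, 1:]) \<le> (\<Sum>j\<in>{0..k}-{i}. degree [:- real j, 1:])"
    using degree_prod_sum_le[of "{0..k}-{i}" "\<lambda>j. [:- real j, 1:]"] by (simp add: o_def)
  also have "\<dots> \<le> card ({0..k}-{i})" by simp
  also have "\<dots> \<le> k"
    using ik by (simp add: card_Diff_singleton)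
  finally show ?thesis unfolding lagr_def by (simp add: degree_smult_le order_trans[OF degree_smult_le])
qed

lemma lagr_eval:
  assumes "i \<le> k" "l \<le> k"
  shows "poly (lagr k i) (real l) = (if l = i then 1 else 0)"
proof (cases "l = i")
  case True
  have "(\<Prod>j\<in>{0..k}-{i}. (real i - real j)) \<noteq> 0" by (auto simp: prod_zero_iff)
  then show ?thesis unfolding lagr_def True by (simp add: poly_prod)
next
  case False
  have "(\<Prod>j\<in>{0..k}-{i}. poly [:- real j, 1:] (real l)) = 0"
    using False assms by (intro prod_zero) auto
  then show ?thesis unfolding lagr_def using False by (simp add: poly_prod)
qed

lemma poly_interp:
  fixes q :: "real poly"
  assumes "degree q \<le> k"
  shows "q = (\<Sum>i\<le>k. smult (poly q (real i)) (lagr k i))"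
proof (rule ccontr)
  define r where "r = q - (\<Sum>i\<le>k. smult (poly q (real i)) (lagr k i))"
  assume "q \<noteq> (\<Sum>i\<le>k. smult (poly q (real i)) (lagr k i))"
  then have r0: "r \<noteq> 0" unfolding r_def by simp
  have dr: "degree r \<le> k" unfolding r_def
    by (intro degree_diff_le assms degree_sum_le) (auto intro: order_trans[OF degree_smult_le] lagr_degree)
  have roots: "real ` {0..k} \<subseteq> {x. poly r x = 0}"
  proof
    fix x assume "x \<in> real ` {0..k}"
    then obtain l where l: "l \<le> k" "x = real l" by auto
    have "(\<Sum>i\<le>k. poly q (real i) * poly (lagr k i) (real l)) = (\<Sum>i\<le>k. if i = l then poly q (real i) else 0)"
      using l(1) by (intro sum.cong refl) (auto simp: lagr_eval)
    also have "\<dots> = poly q (real l)" using l(1) by simp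
    finally show "x \<in> {x. poly r x = 0}" unfolding r_def l(2) by (simp add: poly_sum)
  qed
  have "card (real ` {0..k}) \<le> card {x. poly r x = 0}"
    by (rule card_mono[OF poly_roots_finite[OF r0] roots])
  also have "\<dots> \<le> degree r" by (rule card_poly_roots_bound[OF r0])
  finally have "Suc k \<le> k" using dr by (simp add: card_image inj_on_def)
  then show False by simp
qed

lemma poly_limit:
  fixes p :: "nat \<Rightarrow> real poly"
  assumes "\<And>n. degree (p n) \<le> k" and "\<And>x. (\<lambda>n. poly (p n) x) \<longlonglongrightarrow> f x"
  shows "\<exists>q. \<forall>x. f x = poly q x"
proof (intro exI allI)
  fix x
  have eq: "poly (p n) x = (\<Sum>i\<le>k. poly (p n) (real i) * poly (lagr k i) x)" for n
    by (subst poly_interp[OF assms(1)[of n]]) (simp add: poly_sum)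
  have "(\<lambda>n. \<Sum>i\<le>k. poly (p n) (real i) * poly (lagr k i) x) \<longlonglongrightarrow> (\<Sum>i\<le>k. f (real i) * poly (lagr k i) x)"
    by (intro tendsto_sum tendsto_mult_right assms(2))
  then have "(\<lambda>n. poly (p n) x) \<longlonglongrightarrow> (\<Sum>i\<le>k. f (real i) * poly (lagr k i) x)" unfolding eq .
  then have "f x = (\<Sum>i\<le>k. f (real i) * poly (lagr k i) x)" using assms(2) LIMSEQ_unique by blast
  then show "f x = poly (\<Sum>i\<le>k. smult (f (real i)) (lagr k i)) x" by (simp add: poly_sum)
qed


lemma Avn_approx:
  assumes u: "continuous_on UNIV \<sigma>" and h: "h > 0"
    and bnd: "\<And>s. t \<le> s \<Longrightarrow> s \<le> t + real k * h \<Longrightarrow> \<bar>\<sigma> s - \<sigma> t\<bar> \<le> \<epsilon>"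
  shows "m \<le> k \<Longrightarrow> t \<le> s \<Longrightarrow> s \<le> t + real (k - m) * h \<Longrightarrow> \<bar>(Av h ^^ m) \<sigma> s - h^m * \<sigma> t\<bar> \<le> \<epsilon> * h^m"
proof (induction m arbitrary: s)
  case 0
  then show ?case using bnd by simp
next
  case (Suc m)
  define v where "v = (Av h ^^ m) \<sigma>"
  have vc: "continuous_on UNIV v" unfolding v_def by (rule Avn_cont[OF u])
  obtain \<xi> where \<xi>: "s \<le> \<xi>" "\<xi> \<le> s+h" "antider v (s+h) - antider v s = h * v \<xi>"
    using antider_step[OF vc h, of s] by blast
  have km: "real (k - m) = real (k - Suc m) + 1" using Suc.prems(1) by linarith
  have "\<xi> \<le> t + real (k - m) * h" using \<xi>(2) Suc.prems(3) unfolding km by (simp add: algebra_simps)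
  then have IH: "\<bar>v \<xi> - h^m * \<sigma> t\<bar> \<le> \<epsilon> * h^m"
    unfolding v_def using Suc.IH[of \<xi>] Suc.prems \<xi>(1) by simp
  have "(Av h ^^ Suc m) \<sigma> s = h * v \<xi>" using \<xi>(3) unfolding v_def by (simp add: Av_def)
  then have "(Av h ^^ Suc m) \<sigma> s - h^(Suc m) * \<sigma> t = h * (v \<xi> - h^m * \<sigma> t)"
    by (simp add: right_diff_distrib)
  then have "\<bar>(Av h ^^ Suc m) \<sigma> s - h^(Suc m) * \<sigma> t\<bar> = h * \<bar>v \<xi> - h^m * \<sigma> t\<bar>"
    using h by (simp add: abs_mult)
  also have "\<dots> \<le> h * (\<epsilon> * h^m)" using IH h by (intro mult_left_mono) auto
  finally show ?case by (simp add: algebra_simps)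
qed

lemma nonpoly_diff:
  assumes u: "continuous_on UNIV \<sigma>" and np: "\<not> is_polynomial_fun \<sigma>"
  shows "\<exists>h>0. \<exists>b. (Df h ^^ k) \<sigma> b \<noteq> 0"
proof (rule ccontr)
  assume "\<not> (\<exists>h>0. \<exists>b. (Df h ^^ k) \<sigma> b \<noteq> 0)"
  then have Z: "\<And>h b. h > 0 \<Longrightarrow> (Df h ^^ k) \<sigma> b = 0" by blast
  have ex: "\<exists>p. degree p \<le> k \<and> (\<forall>x. (Av h ^^ k) \<sigma> x = poly p x)" if h: "h > 0" for h
  proof -
    have "\<exists>p. degree p \<le> k \<and> (\<forall>x. chainD h k \<sigma> 0 x = poly p x)"
      by (rule deriv_chain_poly) (auto intro: chainD_deriv[OF u] simp: chainD_k Z[OF h])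
    then show ?thesis unfolding chainD_0 .
  qed
  define hn where "hn n = 1 / (real n + 1)" for n :: nat
  have hn: "hn n > 0" for n unfolding hn_def by simp
  define pp where "pp n = (SOME p. degree p \<le> k \<and> (\<forall>x. (Av (hn n) ^^ k) \<sigma> x = poly p x))" for n
  have pp: "degree (pp n) \<le> k \<and> (\<forall>x. (Av (hn n) ^^ k) \<sigma> x = poly (pp n) x)" for n
    unfolding pp_def by (rule someI_ex[OF ex[OF hn]])
  define qq where "qq n = smult (1 / hn n ^ k) (pp n)" for n
  have "\<exists>q. \<forall>x. \<sigma> x = poly q x"
  proof (rule poly_limit)
    fix n show "degree (qq n) \<le> k" unfolding qq_def using pp[of n] by (simp add: order_trans[OF degree_smult_le])
  next
    fix x
    show "(\<lambda>n. poly (qq n) x) \<longlonglongrightarrow> \<sigma> x"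
    proof (rule LIMSEQ_I)
      fix r :: real assume r: "r > 0"
      have "isCont \<sigma> x" using u by (simp add: continuous_on_eq_continuous_at)
      then obtain d where d: "d > 0" and dd: "\<And>y. dist y x < d \<Longrightarrow> dist (\<sigma> y) (\<sigma> x) < r/2"
        using r unfolding continuous_at_eps_delta by (meson half_gt_zero)
      obtain no :: nat where no: "real k / d < real no" using reals_Archimedean2 by blast
      show "\<exists>no. \<forall>n\<ge>no. norm (poly (qq n) x - \<sigma> x) < r"
      proof (intro exI allI impI)
        fix n assume n: "no \<le> n"
        have kh: "real k * hn n < d"
        proof -
          have "real k < d * real no" using no d by (simp add: field_simps)
          also have "\<dots> \<le> d * (real n + 1)" using n d by (intro mult_left_mono) auto
          finally show ?thesis unfolding hn_def by (simp add: field_simps)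
        qed
        have bnd: "\<bar>\<sigma> s - \<sigma> x\<bar> \<le> r/2" if "x \<le> s" "s \<le> x + real k * hn n" for s
        proof -
          have "dist s x < d" using that kh by (simp add: dist_real_def)
          then show ?thesis using dd[of s] by (simp add: dist_real_def)
        qed
        have A: "\<bar>(Av (hn n) ^^ k) \<sigma> x - hn n ^ k * \<sigma> x\<bar> \<le> r/2 * hn n ^ k"
          by (rule Avn_approx[OF u hn bnd]) auto
        have hk: "hn n ^ k > 0" using hn by simp
        have "poly (qq n) x - \<sigma> x = ((Av (hn n) ^^ k) \<sigma> x - hn n ^ k * \<sigma> x) / hn n ^ k"
        proof -
          have "((Av (hn n) ^^ k) \<sigma> x - hn n ^ k * \<sigma> x) / hn n ^ k = (Av (hn n) ^^ k) \<sigma> x / hn n ^ k - \<sigma> x"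
            using hk hn[of n] by (simp add: diff_divide_distrib)
          also have "\<dots> = poly (qq n) x - \<sigma> x" unfolding qq_def using pp[of n] by simp
          finally show ?thesis by simp
        qed
        then have "\<bar>poly (qq n) x - \<sigma> x\<bar> \<le> r/2"
          using A hk by (simp add: abs_div pos_divide_le_eq)
        then show "norm (poly (qq n) x - \<sigma> x) < r" using r by simp
      qed
    qed
  qed
  then show False using np unfolding is_polynomial_fun_def by metis
qed

lemma SS_monomial:
  assumes u: "continuous_on UNIV \<sigma>" and np: "\<not> is_polynomial_fun \<sigma>"
  shows "(\<lambda>t. t^k) \<in> SS \<sigma>"
proof -
  obtain h b where h: "h > 0" and b: "(Df h ^^ k) \<sigma> b \<noteq> 0" using nonpoly_diff[OF u np] by blast
  show ?thesis
  proof (rule SS_monomial_from_chain[where D="chainD h k \<sigma>" and b=b])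
    show "\<And>j x. j < k \<Longrightarrow> (chainD h k \<sigma> j has_real_derivative chainD h k \<sigma> (Suc j) x) (at x)"
      by (rule chainD_deriv[OF u])
    show "\<And>j. j \<le> k \<Longrightarrow> continuous_on UNIV (chainD h k \<sigma> j)" by (rule chainD_cont[OF u])
    show "\<And>w b. (\<lambda>t. chainD h k \<sigma> 0 (w * t + b)) \<in> SS \<sigma>"
      unfolding chainD_0 by (intro SS_affine Avn_SS SS_sigma u h)
    show "chainD h k \<sigma> k b \<noteq> 0" unfolding chainD_k by (rule b)
  qed
qed

lemma exp_SS:
  assumes u: "continuous_on UNIV \<sigma>" and np: "\<not> is_polynomial_fun \<sigma>"
  shows "exp \<in> SS \<sigma>"
proof (rule SS_closure)
  fix R e :: real assume R: "R > 0" and e: "e > 0"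
  have "(\<lambda>n. inverse (fact n) * R ^ n) \<longlonglongrightarrow> 0" by (rule summable_LIMSEQ_zero[OF summable_exp])
  moreover have "e / exp R > 0" using e by simp
  ultimately obtain N where N: "\<forall>n\<ge>N. norm (inverse (fact n) * R ^ n - 0) < e / exp R"
    by (blast dest: LIMSEQ_D)
  define T where "T t = (\<Sum>m\<in>{..<N}. (1 / fact m) * t^m)" for t :: real
  have TS: "T \<in> SS \<sigma>" unfolding T_def[abs_def] by (intro SS_sum SS_scale SS_monomial u np)
  have "\<forall>t. \<bar>t\<bar> \<le> R \<longrightarrow> \<bar>exp t - T t\<bar> < e"
  proof (intro allI impI)
    fix t :: real assume t: "\<bar>t\<bar> \<le> R"
    obtain z where z: "\<bar>z\<bar> \<le> \<bar>t\<bar>" "exp t = (\<Sum>m<N. t ^ m / fact m) + exp z / fact N * t ^ N"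
      using Maclaurin_exp_le[of t N] by blast
    have "exp t - T t = exp z / fact N * t ^ N" unfolding T_def z(2) by simp
    then have "\<bar>exp t - T t\<bar> = exp z * (\<bar>t\<bar> ^ N / fact N)" by (simp add: abs_mult power_abs)
    also have "\<dots> \<le> exp R * (R ^ N / fact N)"
    proof (intro mult_mono divide_right_mono power_mono)
      show "exp z \<le> exp R" using z(1) t by simp
    qed (use t in auto)
    also have "\<dots> < exp R * (e / exp R)"
    proof -
      have "R ^ N / fact N < e / exp R" using N R by (simp add: field_simps)
      then show ?thesis by (intro mult_strict_left_mono) auto
    qed
    also have "\<dots> = e" by simp
    finally show "\<bar>exp t - T t\<bar> < e" .
  qed
  then show "\<exists>h\<in>SS \<sigma>. \<forall>t. \<bar>t\<bar> \<le> R \<longrightarrow> \<bar>exp t - h t\<bar> < e" using TS by blast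
qed


definition ES :: "(real \<times> ('b \<Rightarrow> real)) list \<Rightarrow> 'b \<Rightarrow> real" where
  "ES L x = (\<Sum>(c,l)\<leftarrow>L. c * exp (l x))"

lemma ES_Nil[simp]: "ES [] x = 0" by (simp add: ES_def)
lemma ES_Cons[simp]: "ES ((c,l)#L) x = c * exp (l x) + ES L x" by (simp add: ES_def)
lemma ES_append: "ES (L1@L2) x = ES L1 x + ES L2 x" by (simp add: ES_def)

definition ESmul :: "(real \<times> ('b \<Rightarrow> real)) list \<Rightarrow> (real \<times> ('b \<Rightarrow> real)) list \<Rightarrow> (real \<times> ('b \<Rightarrow> real)) list" where
  "ESmul L1 L2 = concat (map (\<lambda>(c,l). map (\<lambda>(d,m). (c*d, \<lambda>x. l x + m x)) L2) L1)"

lemma ES_mult1: "c * exp (l x) * ES L2 x = ES (map (\<lambda>(d,m). (c*d, \<lambda>x. l x + m x)) L2) x"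
  by (induction L2) (auto simp: algebra_simps exp_add)

lemma ES_mult: "ES L1 x * ES L2 x = ES (ESmul L1 L2) x"
proof (induction L1)
  case Nil then show ?case by (simp add: ESmul_def)
next
  case (Cons a L1)
  obtain c l where a: "a = (c,l)" by (cases a)
  have "ES (a#L1) x * ES L2 x = c * exp (l x) * ES L2 x + ES L1 x * ES L2 x"
    unfolding a by (simp add: algebra_simps)
  also have "\<dots> = ES (ESmul (a#L1) L2) x"
    unfolding Cons ES_mult1 a by (simp add: ESmul_def ES_append)
  finally show ?case .
qed

lemma ESmul_set: "set (map snd L1) \<subseteq> \<Lambda> \<Longrightarrow> set (map snd L2) \<subseteq> \<Lambda> \<Longrightarrow>
   (\<And>l m. l \<in> \<Lambda> \<Longrightarrow> m \<in> \<Lambda> \<Longrightarrow> (\<lambda>x. l x + m x) \<in> \<Lambda>) \<Longrightarrow> set (map snd (ESmul L1 L2)) \<subseteq> \<Lambda>"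
  unfolding ESmul_def by (force split: prod.splits)

lemma ES_cont: "(\<And>l. l \<in> set (map snd L) \<Longrightarrow> continuous_on S l) \<Longrightarrow> continuous_on S (ES L)"
proof (induction L)
  case Nil then show ?case by (simp add: ES_def)
next
  case (Cons a L)
  obtain c l where a: "a = (c,l)" by (cases a)
  have "continuous_on S (\<lambda>x. c * exp (l x) + ES L x)"
    using Cons by (intro continuous_intros) (auto simp: a)
  then show ?case unfolding a by simp
qed

lemma SW_exp:
  fixes S :: "'b::t2_space set" and \<Lambda> :: "('b \<Rightarrow> real) set"
  assumes S: "compact S" and z: "(\<lambda>x. 0) \<in> \<Lambda>"
    and add: "\<And>l m. l \<in> \<Lambda> \<Longrightarrow> m \<in> \<Lambda> \<Longrightarrow> (\<lambda>x. l x + m x) \<in> \<Lambda>"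
    and cont: "\<And>l. l \<in> \<Lambda> \<Longrightarrow> continuous_on S l"
    and sep: "\<And>x y. x \<in> S \<Longrightarrow> y \<in> S \<Longrightarrow> x \<noteq> y \<Longrightarrow> \<exists>l\<in>\<Lambda>. l x \<noteq> l y"
    and f: "continuous_on S f" and e: "e > 0"
  shows "\<exists>L. set (map snd L) \<subseteq> \<Lambda> \<and> (\<forall>x\<in>S. \<bar>f x - ES L x\<bar> < e)"
proof -
  define P where "P g \<longleftrightarrow> (\<exists>L. set (map snd L) \<subseteq> \<Lambda> \<and> g = ES L)" for g
  have "\<exists>g. P g \<and> (\<forall>x\<in>S. \<bar>f x - g x\<bar> < e)"
  proof (rule Stone_Weierstrass_HOL[OF S _ _ _ _ _ f e])
    fix c :: real
    show "P (\<lambda>x. c)" unfolding P_def using z by (intro exI[of _ "[(c, \<lambda>x. 0)]"]) auto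
  next
    fix g assume "P g"
    then obtain L where L: "set (map snd L) \<subseteq> \<Lambda>" "g = ES L" unfolding P_def by blast
    show "continuous_on S g" unfolding L(2) by (rule ES_cont) (use L(1) cont in blast)
  next
    fix g h assume "P g \<and> P h"
    then obtain L1 L2 where "set (map snd L1) \<subseteq> \<Lambda>" "g = ES L1" "set (map snd L2) \<subseteq> \<Lambda>" "h = ES L2"
      unfolding P_def by blast
    then show "P (\<lambda>x. g x + h x)" unfolding P_def by (intro exI[of _ "L1@L2"]) (auto simp: ES_append)
  next
    fix g h assume "P g \<and> P h"
    then obtain L1 L2 where L: "set (map snd L1) \<subseteq> \<Lambda>" "g = ES L1" "set (map snd L2) \<subseteq> \<Lambda>" "h = ES L2"
      unfolding P_def by blast
    show "P (\<lambda>x. g x * h x)" unfolding P_def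
      by (intro exI[of _ "ESmul L1 L2"] conjI ESmul_set[OF L(1) L(3) add]) (auto simp: L ES_mult)
  next
    fix x y assume "x \<in> S \<and> y \<in> S \<and> x \<noteq> y"
    then obtain l where l: "l \<in> \<Lambda>" "l x \<noteq> l y" using sep by blast
    show "\<exists>g. P g \<and> g x \<noteq> g y" unfolding P_def
      by (intro exI[of _ "ES [(1,l)]"] conjI exI[of _ "[(1,l)]"]) (use l in auto)
  qed
  then show ?thesis unfolding P_def by blast
qed

definition NN :: "(real\<Rightarrow>real) \<Rightarrow> (real \<times> 'a::real_inner \<times> real) list \<Rightarrow> 'a \<Rightarrow> real" where
  "NN \<sigma> U x = (\<Sum>(a,w,b)\<leftarrow>U. a * \<sigma> (w \<bullet> x + b))"

lemma NN_Nil[simp]: "NN \<sigma> [] x = 0" by (simp add: NN_def)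
lemma NN_append: "NN \<sigma> (U1@U2) x = NN \<sigma> U1 x + NN \<sigma> U2 x" by (simp add: NN_def)

lemma NN_net1: "NN \<sigma> (map (\<lambda>(v,a,b). (c * v, a *\<^sub>R w, b)) V) x = c * net1 \<sigma> V (w \<bullet> x)"
  by (induction V) (auto simp: NN_def net1_def algebra_simps)

lemma UA_d:
  fixes X :: "'a::euclidean_space set"
  assumes X: "compact X" and u: "continuous_on UNIV \<sigma>" and np: "\<not> is_polynomial_fun \<sigma>"
    and g: "continuous_on X g" and e: "e > 0"
  shows "\<exists>U. \<forall>x\<in>X. \<bar>g x - NN \<sigma> U x\<bar> < e"
proof -
  define \<Lambda> where "\<Lambda> = {l. \<exists>w::'a. l = (\<lambda>x. w \<bullet> x)}"
  have e2: "e/2 > 0" using e by simp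
  obtain L where L: "set (map snd L) \<subseteq> \<Lambda>" "\<forall>x\<in>X. \<bar>g x - ES L x\<bar> < e/2"
  proof -
    have "\<exists>L. set (map snd L) \<subseteq> \<Lambda> \<and> (\<forall>x\<in>X. \<bar>g x - ES L x\<bar> < e/2)"
    proof (rule SW_exp[OF X _ _ _ _ g e2])
      show "(\<lambda>x. 0) \<in> \<Lambda>" unfolding \<Lambda>_def by (auto intro!: exI[of _ 0])
      show "\<And>l m. l \<in> \<Lambda> \<Longrightarrow> m \<in> \<Lambda> \<Longrightarrow> (\<lambda>x. l x + m x) \<in> \<Lambda>"
        unfolding \<Lambda>_def by (auto simp: inner_add_left[symmetric])
      show "\<And>l. l \<in> \<Lambda> \<Longrightarrow> continuous_on X l" unfolding \<Lambda>_def by (auto intro: continuous_intros)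
      fix x y :: 'a assume "x \<noteq> y"
      then have "(x - y) \<bullet> x \<noteq> (x - y) \<bullet> y"
        by (metis eq_iff_diff_eq_0 inner_diff_right inner_eq_zero_iff)
      then show "\<exists>l\<in>\<Lambda>. l x \<noteq> l y" unfolding \<Lambda>_def by blast
    qed
    then show ?thesis using that by blast
  qed
  obtain B where B: "\<And>x. x \<in> X \<Longrightarrow> norm x \<le> B"
    using compact_imp_bounded[OF X] unfolding bounded_iff by blast
  have main: "\<forall>\<eta>>0. set (map snd L') \<subseteq> \<Lambda> \<longrightarrow> (\<exists>U. \<forall>x\<in>X. \<bar>ES L' x - NN \<sigma> U x\<bar> < \<eta>)" for L'
  proof (induction L')
    case Nil
    show ?case by (intro allI impI exI[of _ "[]"]) simp
  next
    case (Cons a L')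
    show ?case
    proof (intro allI impI)
    fix \<eta> :: real assume eta: "\<eta> > 0" and sa: "set (map snd (a#L')) \<subseteq> \<Lambda>"
    obtain c l where a: "a = (c,l)" by (cases a)
    have "l \<in> \<Lambda>" using sa unfolding a by simp
    then obtain w where w: "l = (\<lambda>x. w \<bullet> x)" unfolding \<Lambda>_def by blast
    have h2: "\<eta>/2 > 0" using eta by simp
    have sL: "set (map snd L') \<subseteq> \<Lambda>" using sa by simp
    obtain U1 where U1: "\<forall>x\<in>X. \<bar>ES L' x - NN \<sigma> U1 x\<bar> < \<eta>/2"
      using Cons.IH[rule_format, OF h2 sL] by (elim exE)
    define R where "R = norm w * \<bar>B\<bar> + 1"
    have R: "R > 0" unfolding R_def by (simp add: add_nonneg_pos)
    have c2: "\<eta>/2/(\<bar>c\<bar>+1) > 0" using h2 by (simp add: add_nonneg_pos)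
    obtain V where V: "\<forall>t. \<bar>t\<bar> \<le> R \<longrightarrow> \<bar>exp t - net1 \<sigma> V t\<bar> < \<eta>/2/(\<bar>c\<bar>+1)"
      using SS_D[OF exp_SS[OF u np] R c2] by blast
    define U2 where "U2 = map (\<lambda>(v,a,b). (c * v, a *\<^sub>R w, b)) V"
    show "\<exists>U. \<forall>x\<in>X. \<bar>ES (a # L') x - NN \<sigma> U x\<bar> < \<eta>"
    proof (intro exI[of _ "U2 @ U1"] ballI)
      fix x assume x: "x \<in> X"
      have "\<bar>w \<bullet> x\<bar> \<le> norm w * norm x" by (rule Cauchy_Schwarz_ineq2)
      also have "\<dots> \<le> norm w * \<bar>B\<bar>" using B[OF x] by (intro mult_left_mono) auto
      finally have wx: "\<bar>w \<bullet> x\<bar> \<le> R" unfolding R_def by simp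
      have "\<bar>c * exp (w \<bullet> x) - NN \<sigma> U2 x\<bar> = \<bar>c\<bar> * \<bar>exp (w \<bullet> x) - net1 \<sigma> V (w \<bullet> x)\<bar>"
        unfolding U2_def NN_net1 by (simp add: abs_mult[symmetric] right_diff_distrib)
      also have "\<dots> \<le> \<bar>c\<bar> * (\<eta>/2/(\<bar>c\<bar>+1))" using V wx by (intro mult_left_mono) auto
      also have "\<dots> < \<eta>/2" using h2 by (intro aux_frac) auto
      finally have t1: "\<bar>c * exp (w \<bullet> x) - NN \<sigma> U2 x\<bar> < \<eta>/2" .
      have t2: "\<bar>ES L' x - NN \<sigma> U1 x\<bar> < \<eta>/2" using U1 x by blast
      show "\<bar>ES (a # L') x - NN \<sigma> (U2 @ U1) x\<bar> < \<eta>"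
        unfolding a w ES_Cons NN_append using t1 t2 by linarith
    qed
    qed
  qed
  obtain U where U: "\<forall>x\<in>X. \<bar>ES L x - NN \<sigma> U x\<bar> < e/2" using main[of L] e2 L(1) by blast
  show ?thesis
  proof (intro exI[of _ U] ballI)
    fix x assume "x \<in> X"
    then have "\<bar>g x - ES L x\<bar> < e/2" "\<bar>ES L x - NN \<sigma> U x\<bar> < e/2" using L(2) U by blast+
    then show "\<bar>g x - NN \<sigma> U x\<bar> < e" by linarith
  qed
qed


lemma BP_facts:
  assumes "p \<in> borel_prob_measures X"
  shows "prob_space p" "sets p = sets (restrict_space borel X)" "space p = X"
proof -
  show "prob_space p" "sets p = sets (restrict_space borel X)"
    using assms unfolding borel_prob_measures_def mem_Collect_eq by (rule conjunct1, rule conjunct2)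
  then have "space p = space (restrict_space borel X)" by (intro sets_eq_imp_space_eq) simp
  then show "space p = X" by (simp add: space_restrict_space)
qed

lemma BP_meas:
  assumes "p \<in> borel_prob_measures X" "continuous_on X g"
  shows "g \<in> borel_measurable p"
  using borel_measurable_continuous_on_restrict[OF assms(2)] measurable_cong_sets[OF BP_facts(2)[OF assms(1)] refl]
  by blast

lemma BP_int:
  fixes g :: "'a::euclidean_space \<Rightarrow> real"
  assumes X: "compact X" and p: "p \<in> borel_prob_measures X" and g: "continuous_on X g"
  shows "integrable p g"
proof -
  interpret prob_space p by (rule BP_facts(1)[OF p])
  have "bounded (g ` X)" by (rule compact_imp_bounded[OF compact_continuous_image[OF g X]])
  then obtain B where B: "\<And>x. x \<in> X \<Longrightarrow> norm (g x) \<le> B" unfolding bounded_iff by blast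
  show ?thesis
  proof (rule finite_measure.integrable_const_bound[where B=B])
    show "finite_measure p" by unfold_locales
    show "AE x in p. norm (g x) \<le> B" using B BP_facts(3)[OF p] by (intro AE_I2) auto
    show "g \<in> borel_measurable p" by (rule BP_meas[OF p g])
  qed
qed

lemma BP_bound:
  fixes f :: "'a::euclidean_space \<Rightarrow> real"
  assumes p: "p \<in> borel_prob_measures X" and f: "integrable p f" and B: "\<And>x. x \<in> X \<Longrightarrow> \<bar>f x\<bar> \<le> B"
  shows "\<bar>integral\<^sup>L p f\<bar> \<le> B"
proof -
  interpret prob_space p by (rule BP_facts(1)[OF p])
  have "\<bar>integral\<^sup>L p f\<bar> \<le> integral\<^sup>L p (\<lambda>x. B)"
    by (rule integral_abs_bound_integral[OF f]) (use B BP_facts(3)[OF p] in auto)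
  also have "\<dots> = B" by (simp add: prob_space)
  finally show ?thesis .
qed


definition N2 :: "(real\<Rightarrow>real) \<Rightarrow> nat \<Rightarrow> nat \<Rightarrow> (nat \<Rightarrow> 'a::euclidean_space) \<Rightarrow> (nat \<Rightarrow> real) \<Rightarrow> (nat \<Rightarrow> nat \<Rightarrow> real) \<Rightarrow> (nat \<Rightarrow> real) \<Rightarrow> (nat \<Rightarrow> real) \<Rightarrow> real \<Rightarrow> 'a measure \<Rightarrow> real" where
  "N2 \<sigma> k m W3 b3 W2 b2 w1 b1 p = (\<Sum>j<m. w1 j * \<sigma> ((\<Sum>i<k. W2 j i * (\<integral>x. \<sigma> (W3 i \<bullet> x + b3 i) \<partial>p)) + b2 j)) + b1"

definition isN2 :: "(real\<Rightarrow>real) \<Rightarrow> ('a::euclidean_space measure \<Rightarrow> real) \<Rightarrow> bool" where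
  "isN2 \<sigma> F \<longleftrightarrow> (\<exists>k m W3 b3 W2 b2 w1 b1. \<forall>p. F p = N2 \<sigma> k m W3 b3 W2 b2 w1 b1 p)"

lemma sum_split_nat: "(\<Sum>i<a+(b::nat). f i) = (\<Sum>i<a. f i) + (\<Sum>i<b. f (a+i))"
  by (induction b) (simp_all add: add.assoc)

lemma sum_list_nth': "(\<Sum>x\<leftarrow>xs. f x) = (\<Sum>i<length xs. f (xs!i))"
  by (simp add: sum_list_sum_nth atLeast0LessThan)

lemma isN2_const: "isN2 \<sigma> (\<lambda>p. c)"
  unfolding isN2_def N2_def by (intro exI[of _ 0] exI[of _ c]) simp

lemma isN2_add:
  assumes "isN2 \<sigma> F" "isN2 \<sigma> G"
  shows "isN2 \<sigma> (\<lambda>p. F p + G p)"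
proof -
  obtain k1 m1 W3 b3 W2 b2 w1 b1 where F: "\<And>p. F p = N2 \<sigma> k1 m1 W3 b3 W2 b2 w1 b1 p"
    using assms(1) unfolding isN2_def by blast
  obtain k2 m2 W3' b3' W2' b2' w1' b1' where G: "\<And>p. G p = N2 \<sigma> k2 m2 W3' b3' W2' b2' w1' b1' p"
    using assms(2) unfolding isN2_def by blast
  define W3n where "W3n i = (if i < k1 then W3 i else W3' (i - k1))" for i
  define b3n where "b3n i = (if i < k1 then b3 i else b3' (i - k1))" for i
  define W2n where "W2n j i = (if j < m1 then (if i < k1 then W2 j i else 0) else (if i < k1 then 0 else W2' (j - m1) (i - k1)))" for j i
  define b2n where "b2n j = (if j < m1 then b2 j else b2' (j - m1))" for j
  define w1n where "w1n j = (if j < m1 then w1 j else w1' (j - m1))" for j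
  define J where "J p i = (\<integral>x. \<sigma> (W3n i \<bullet> x + b3n i) \<partial>p)" for p i
  have inner1: "(\<Sum>i<k1+k2. W2n j i * J p i) = (\<Sum>i<k1. W2 j i * (\<integral>x. \<sigma> (W3 i \<bullet> x + b3 i) \<partial>p))" if "j < m1" for j p
    unfolding sum_split_nat using that by (simp add: W2n_def J_def W3n_def b3n_def)
  have inner2: "(\<Sum>i<k1+k2. W2n (m1+j) i * J p i) = (\<Sum>i<k2. W2' j i * (\<integral>x. \<sigma> (W3' i \<bullet> x + b3' i) \<partial>p))" for j p
    unfolding sum_split_nat by (simp add: W2n_def J_def W3n_def b3n_def)
  have "F p + G p = N2 \<sigma> (k1+k2) (m1+m2) W3n b3n W2n b2n w1n (b1+b1') p" for p
  proof -
    have "N2 \<sigma> (k1+k2) (m1+m2) W3n b3n W2n b2n w1n (b1+b1') p =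
      (\<Sum>j<m1+m2. w1n j * \<sigma> ((\<Sum>i<k1+k2. W2n j i * J p i) + b2n j)) + (b1 + b1')"
      unfolding N2_def J_def ..
    also have "\<dots> = ((\<Sum>j<m1. w1 j * \<sigma> ((\<Sum>i<k1. W2 j i * (\<integral>x. \<sigma> (W3 i \<bullet> x + b3 i) \<partial>p)) + b2 j))
       + (\<Sum>j<m2. w1' j * \<sigma> ((\<Sum>i<k2. W2' j i * (\<integral>x. \<sigma> (W3' i \<bullet> x + b3' i) \<partial>p)) + b2' j))) + (b1 + b1')"
    proof -
      have e1: "(\<Sum>j<m1. w1n j * \<sigma> ((\<Sum>i<k1+k2. W2n j i * J p i) + b2n j)) = (\<Sum>j<m1. w1 j * \<sigma> ((\<Sum>i<k1. W2 j i * (\<integral>x. \<sigma> (W3 i \<bullet> x + b3 i) \<partial>p)) + b2 j))"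
        by (rule sum.cong) (simp_all add: inner1 w1n_def b2n_def)
      have e2: "(\<Sum>j<m2. w1n (m1+j) * \<sigma> ((\<Sum>i<k1+k2. W2n (m1+j) i * J p i) + b2n (m1+j))) = (\<Sum>j<m2. w1' j * \<sigma> ((\<Sum>i<k2. W2' j i * (\<integral>x. \<sigma> (W3' i \<bullet> x + b3' i) \<partial>p)) + b2' j))"
        by (rule sum.cong) (simp_all add: inner2 w1n_def b2n_def)
      show ?thesis by (simp only: sum_split_nat[where a=m1 and b=m2] e1 e2)
    qed
    also have "\<dots> = F p + G p" unfolding F G N2_def by simp
    finally show ?thesis by simp
  qed
  then show ?thesis unfolding isN2_def by blast
qed

lemma isN2_sum_list:
  assumes "\<And>x. x \<in> set xs \<Longrightarrow> isN2 \<sigma> (F x)"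
  shows "isN2 \<sigma> (\<lambda>p. \<Sum>x\<leftarrow>xs. F x p)"
  using assms
proof (induction xs)
  case Nil then show ?case using isN2_const[of \<sigma> 0] by simp
next
  case (Cons a xs)
  have "isN2 \<sigma> (\<lambda>p. F a p + (\<Sum>x\<leftarrow>xs. F x p))" by (rule isN2_add) (use Cons in auto)
  then show ?case by simp
qed

lemma isN2_term:
  "isN2 \<sigma> (\<lambda>p. c * net1 \<sigma> V (\<Sum>(a,w,b)\<leftarrow>U. a * (\<integral>x. \<sigma> (w \<bullet> x + b) \<partial>p)))"
proof -
  define k where "k = length U"
  define m where "m = length V"
  define W3 where "W3 i = fst (snd (U!i))" for i
  define b3 where "b3 i = snd (snd (U!i))" for i
  define W2 where "W2 j i = fst (snd (V!j)) * fst (U!i)" for j i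
  define b2 where "b2 j = snd (snd (V!j))" for j
  define w1 where "w1 j = c * fst (V!j)" for j
  have "c * net1 \<sigma> V (\<Sum>(a,w,b)\<leftarrow>U. a * (\<integral>x. \<sigma> (w \<bullet> x + b) \<partial>p)) = N2 \<sigma> k m W3 b3 W2 b2 w1 0 p" for p
  proof -
    define s where "s = (\<Sum>i<k. fst (U!i) * (\<integral>x. \<sigma> (W3 i \<bullet> x + b3 i) \<partial>p))"
    have s: "(\<Sum>(a,w,b)\<leftarrow>U. a * (\<integral>x. \<sigma> (w \<bullet> x + b) \<partial>p)) = s"
      unfolding sum_list_nth' s_def k_def W3_def b3_def by (simp add: split_beta)
    have "c * net1 \<sigma> V s = (\<Sum>j<m. w1 j * \<sigma> (fst (snd (V!j)) * s + b2 j))"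
      unfolding net1_def sum_list_nth' m_def w1_def b2_def by (simp add: split_beta sum_distrib_left mult.assoc)
    also have "\<dots> = N2 \<sigma> k m W3 b3 W2 b2 w1 0 p"
      unfolding N2_def s_def W2_def by (simp add: sum_distrib_left mult.assoc)
    finally show ?thesis unfolding s .
  qed
  then show ?thesis unfolding isN2_def by blast
qed


typedef ('i, 'r) pf = "UNIV :: ('i \<Rightarrow> 'r) set" by simp

instantiation pf :: (type, topological_space) topological_space
begin
definition open_pf :: "('a, 'b) pf set \<Rightarrow> bool" where
  "open_pf U \<longleftrightarrow> open (Rep_pf ` U)"
instance
proof
  have "range Rep_pf = (UNIV :: ('a \<Rightarrow> 'b) set)"
    by (metis UNIV_I Abs_pf_inverse surjI)
  then show "open (UNIV :: ('a, 'b) pf set)" unfolding open_pf_def by simp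
next
  fix S T :: "('a, 'b) pf set" assume "open S" "open T"
  moreover have "Rep_pf ` (S \<inter> T) = Rep_pf ` S \<inter> Rep_pf ` T"
    by (intro image_Int) (meson Rep_pf_inject inj_onI)
  ultimately show "open (S \<inter> T)" unfolding open_pf_def by auto
next
  fix K :: "('a, 'b) pf set set" assume "\<forall>S\<in>K. open S"
  then show "open (\<Union> K)" unfolding open_pf_def image_Union by auto
qed
end

lemma Rep_pf_range: "range Rep_pf = UNIV"
  by (metis UNIV_I Abs_pf_inverse surjI)

lemma Rep_pf_surj: "Rep_pf ` (Rep_pf -` U) = U"
  by (simp add: image_vimage_eq Rep_pf_range)

lemma fun_hausdorff: "Hausdorff_space (euclidean :: ('a \<Rightarrow> 'b::t2_space) topology)"
proof -
  have "Hausdorff_space (product_topology (\<lambda>i::'a. euclidean::'b topology) UNIV)"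
  proof -
    have "Hausdorff_space (euclidean :: 'b topology)"
      unfolding Hausdorff_space_def by (metis disjnt_def hausdorff open_openin)
    then show ?thesis by (simp add: Hausdorff_space_product_topology)
  qed
  then show ?thesis by (metis euclidean_product_topology)
qed

instance pf :: (type, t2_space) t2_space
proof
  fix x y :: "('a, 'b) pf" assume xy: "x \<noteq> y"
  then have "Rep_pf x \<noteq> Rep_pf y" using Rep_pf_inject by blast
  then obtain U V where UV: "openin euclidean U" "openin euclidean V" "Rep_pf x \<in> U" "Rep_pf y \<in> V" "disjnt U V"
    using fun_hausdorff unfolding Hausdorff_space_def by (metis UNIV_I topspace_euclidean)
  show "\<exists>U V. open U \<and> open V \<and> x \<in> U \<and> y \<in> V \<and> U \<inter> V = {}"
  proof (intro exI conjI)
    show "open (Rep_pf -` U)" "open (Rep_pf -` V)" unfolding open_pf_def Rep_pf_surj using UV by auto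
    show "x \<in> Rep_pf -` U" "y \<in> Rep_pf -` V" using UV by auto
    show "Rep_pf -` U \<inter> Rep_pf -` V = {}" using UV(5) by (auto simp: disjnt_def)
  qed
qed

lemma Abs_pf_cont:
  fixes h :: "'c \<Rightarrow> ('a \<Rightarrow> 'b::topological_space)"
  assumes "continuous_map T euclidean h"
  shows "continuous_map T euclidean (\<lambda>x. Abs_pf (h x))"
  unfolding continuous_map_def
proof (intro conjI allI impI)
  show "(\<lambda>x. Abs_pf (h x)) \<in> topspace T \<rightarrow> topspace euclidean" by simp
  fix V :: "('a, 'b) pf set" assume "openin euclidean V"
  then have "open (Rep_pf ` V)" by (simp add: open_pf_def)
  then have "openin T {x \<in> topspace T. h x \<in> Rep_pf ` V}" using assms unfolding continuous_map_def by simp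
  moreover have "{x \<in> topspace T. h x \<in> Rep_pf ` V} = {x \<in> topspace T. Abs_pf (h x) \<in> V}"
  proof -
    have "h x \<in> Rep_pf ` V \<longleftrightarrow> Abs_pf (h x) \<in> V" for x
      by (metis (no_types, lifting) Abs_pf_inverse Rep_pf_inverse UNIV_I image_iff)
    then show ?thesis by blast
  qed
  ultimately show "openin T {x \<in> topspace T. Abs_pf (h x) \<in> V}" by simp
qed

lemma Rep_pf_coord_cont: "continuous_on UNIV (\<lambda>z::('a,'b::topological_space) pf. Rep_pf z g)"
  unfolding continuous_on_open_vimage[OF open_UNIV]
proof (intro allI impI)
  fix W :: "'b set" assume W: "open W"
  have "open {h::'a\<Rightarrow>'b. h g \<in> W}"
  proof -
    have "continuous_on UNIV (\<lambda>h::'a\<Rightarrow>'b. h g)" by (rule continuous_on_product_coordinates)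
    then have "open ((\<lambda>h::'a\<Rightarrow>'b. h g) -` W \<inter> UNIV)" using W unfolding continuous_on_open_vimage[OF open_UNIV] by blast
    then show ?thesis by (simp add: vimage_def)
  qed
  moreover have "Rep_pf ` ((\<lambda>z. Rep_pf z g) -` W \<inter> UNIV) = {h. h g \<in> W}"
    using Rep_pf_surj[of "{h. h g \<in> W}"] by (simp add: vimage_def)
  ultimately show "open ((\<lambda>z. Rep_pf z g) -` W \<inter> UNIV)" unfolding open_pf_def by simp
qed

definition Bs :: "'a::euclidean_space set \<Rightarrow> 'a measure set set" where
  "Bs X = {{p. (\<integral>x. g x \<partial>p) \<in> U} | g U. continuous_on X g \<and> open (U :: real set)}"

definition Phi :: "'a::euclidean_space set \<Rightarrow> 'a measure \<Rightarrow> ('a \<Rightarrow> real) \<Rightarrow> real" where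
  "Phi X p = (\<lambda>g. if continuous_on X g then (\<integral>x. g x \<partial>p) else 0)"

lemma ws_eq: "weak_star_topology X = subtopology (topology_generated_by (Bs X)) (borel_prob_measures X)"
  unfolding weak_star_topology_def Bs_def ..

lemma Bs_mem: "continuous_on X (g::'a::euclidean_space \<Rightarrow> real) \<Longrightarrow> open U \<Longrightarrow> {p. (\<integral>x. g x \<partial>p) \<in> U} \<in> Bs X"
  unfolding Bs_def mem_Collect_eq by (intro exI[of _ g] exI[of _ U] conjI refl)

lemma TG_open: "continuous_on X (g::'a::euclidean_space \<Rightarrow> real) \<Longrightarrow> open U \<Longrightarrow> openin (topology_generated_by (Bs X)) {p. (\<integral>x. g x \<partial>p) \<in> U}"
  unfolding openin_topology_generated_by_iff
  by (rule generate_topology_on.Basis) (rule Bs_mem)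

lemma TG_topspace: "topspace (topology_generated_by (Bs X)) = UNIV"
proof -
  have "openin (topology_generated_by (Bs X)) {p. (\<integral>x. (\<lambda>_. 0::real) x \<partial>p) \<in> (UNIV::real set)}"
    by (rule TG_open) auto
  then have "UNIV \<subseteq> topspace (topology_generated_by (Bs X))" using openin_subset by fastforce
  then show ?thesis by blast
qed

lemma sub_eq:
  assumes "PP \<subseteq> borel_prob_measures X"
  shows "subtopology (weak_star_topology X) PP = subtopology (topology_generated_by (Bs X)) PP"
  unfolding ws_eq subtopology_subtopology using assms by (simp add: Int_absorb1)

lemma sub_topspace: "topspace (subtopology (topology_generated_by (Bs X)) PP) = PP"
  by (simp only: topspace_subtopology TG_topspace) simp

lemma indist:
  assumes "generate_topology_on B Ov" "\<And>S. S \<in> B \<Longrightarrow> p \<in> S \<longleftrightarrow> q \<in> S"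
  shows "p \<in> Ov \<longleftrightarrow> q \<in> Ov"
  using assms by (induction rule: generate_topology_on.induct) auto

lemma Phi_cont:
  "continuous_map (subtopology (topology_generated_by (Bs X)) PP) euclidean (Phi X)"
proof -
  have "continuous_map (subtopology (topology_generated_by (Bs X)) PP) (product_topology (\<lambda>i. euclidean) UNIV) (Phi X)"
  proof (rule continuous_map_coordinatewise_then_product)
    fix g :: "'a \<Rightarrow> real"
    show "continuous_map (subtopology (topology_generated_by (Bs X)) PP) euclidean (\<lambda>p. Phi X p g)"
    proof (cases "continuous_on X g")
      case True
      show ?thesis unfolding continuous_map_def
      proof (intro conjI allI impI)
        show "(\<lambda>p. Phi X p g) \<in> topspace (subtopology (topology_generated_by (Bs X)) PP) \<rightarrow> topspace euclidean" by simp
        fix U :: "real set" assume "openin euclidean U"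
        then have U: "open U" by simp
        have "openin (subtopology (topology_generated_by (Bs X)) PP) (PP \<inter> {p. (\<integral>x. g x \<partial>p) \<in> U})"
          by (rule openin_subtopology_Int2[OF TG_open[OF True U]])
        moreover have "PP \<inter> {p. (\<integral>x. g x \<partial>p) \<in> U} = {p \<in> topspace (subtopology (topology_generated_by (Bs X)) PP). Phi X p g \<in> U}"
          unfolding sub_topspace Phi_def using True by auto
        ultimately show "openin (subtopology (topology_generated_by (Bs X)) PP) {p \<in> topspace (subtopology (topology_generated_by (Bs X)) PP). Phi X p g \<in> U}"
          by simp
      qed
    next
      case False
      then have "(\<lambda>p. Phi X p g) = (\<lambda>p. 0)" unfolding Phi_def by simp
      then show ?thesis by simp
    qed
  qed auto
  then show ?thesis by (simp add: euclidean_product_topology)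
qed

lemma Phi_eq_f:
  assumes PP: "PP \<subseteq> borel_prob_measures X"
    and f: "continuous_map (subtopology (weak_star_topology X) PP) euclideanreal f"
    and p: "p \<in> PP" and q: "q \<in> PP" and eq: "Phi X p = Phi X q"
  shows "f p = f q"
proof (rule ccontr)
  assume ne: "f p \<noteq> f q"
  let ?T = "subtopology (topology_generated_by (Bs X)) PP"
  have fc: "continuous_map ?T euclideanreal f" using f sub_eq[OF PP] by simp
  have "openin euclideanreal (- {f q})" by (simp add: open_Compl)
  then have "openin ?T {x \<in> topspace ?T. f x \<in> - {f q}}" using fc unfolding continuous_map_def by blast
  then obtain Ov where O: "openin (topology_generated_by (Bs X)) Ov" "{x \<in> topspace ?T. f x \<in> - {f q}} = Ov \<inter> PP"
    unfolding openin_subtopology by blast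
  have pO: "p \<in> Ov" using O(2) p ne sub_topspace by blast
  have qO: "q \<notin> Ov" using O(2) q sub_topspace by blast
  have "p \<in> Ov \<longleftrightarrow> q \<in> Ov"
  proof (rule indist[OF O(1)[unfolded openin_topology_generated_by_iff]])
    fix S assume "S \<in> Bs X"
    then obtain g :: "'a \<Rightarrow> real" and U :: "real set" where gU: "continuous_on X g" "S = {p. (\<integral>x. g x \<partial>p) \<in> U}"
      unfolding Bs_def by blast
    have "(\<integral>x. g x \<partial>p) = (\<integral>x. g x \<partial>q)" using fun_cong[OF eq, of g] gU(1) unfolding Phi_def by simp
    then show "p \<in> S \<longleftrightarrow> q \<in> S" unfolding gU(2) by simp
  qed
  then show False using pO qO by blast
qed

definition Psi :: "'a::euclidean_space set \<Rightarrow> 'a measure \<Rightarrow> ('a \<Rightarrow> real, real) pf" where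
  "Psi X p = Abs_pf (Phi X p)"

lemma Psi_cont: "continuous_map (subtopology (topology_generated_by (Bs X)) PP) euclidean (Psi X)"
  unfolding Psi_def[abs_def] by (rule Abs_pf_cont[OF Phi_cont])

lemma Rep_Psi: "Rep_pf (Psi X p) = Phi X p"
  unfolding Psi_def by (simp add: Abs_pf_inverse)

lemma factor:
  assumes PP: "PP \<subseteq> borel_prob_measures X"
    and cpt: "compactin (weak_star_topology X) PP"
    and f: "continuous_map (subtopology (weak_star_topology X) PP) euclideanreal f"
  shows "compact (Psi X ` PP)" "\<exists>F. continuous_on (Psi X ` PP) F \<and> (\<forall>p\<in>PP. F (Psi X p) = f p)"
proof -
  let ?T = "subtopology (topology_generated_by (Bs X)) PP"
  have fc: "continuous_map ?T euclideanreal f" using f sub_eq[OF PP] by simp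
  have cT: "compact_space ?T"
    using compact_space_subtopology[OF cpt] sub_eq[OF PP] by simp
  have "compactin ?T PP" using cT sub_topspace[of X PP] by (metis compact_space_def)
  then have "compactin euclidean (Psi X ` PP)" by (rule image_compactin[OF _ Psi_cont])
  then show K: "compact (Psi X ` PP)" by (simp add: compactin_euclidean_iff)
  define F where "F z = f (SOME p. p \<in> PP \<and> Psi X p = z)" for z
  have Fp: "F (Psi X p) = f p" if p: "p \<in> PP" for p
  proof -
    have "\<exists>q. q \<in> PP \<and> Psi X q = Psi X p" using p by blast
    then have "(SOME q. q \<in> PP \<and> Psi X q = Psi X p) \<in> PP \<and> Psi X (SOME q. q \<in> PP \<and> Psi X q = Psi X p) = Psi X p"
      by (rule someI_ex)
    moreover have "Psi X q = Psi X p \<Longrightarrow> Phi X q = Phi X p" for q using Rep_Psi by metis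
    ultimately show ?thesis unfolding F_def using Phi_eq_f[OF PP f _ p] by metis
  qed
  have "continuous_on (Psi X ` PP) F"
    unfolding continuous_closedin_preimage_eq
  proof (intro allI impI)
    fix C :: "real set" assume C: "closed C"
    have "closedin ?T {x \<in> topspace ?T. f x \<in> C}"
      by (rule closedin_continuous_map_preimage[OF fc]) (simp add: C)
    then have "compactin ?T {x \<in> topspace ?T. f x \<in> C}" by (rule closedin_compact_space[OF cT])
    then have "compactin euclidean (Psi X ` {x \<in> topspace ?T. f x \<in> C})" by (rule image_compactin[OF _ Psi_cont])
    then have "closed (Psi X ` {x \<in> topspace ?T. f x \<in> C})" by (simp add: compactin_euclidean_iff compact_imp_closed)
    moreover have "Psi X ` PP \<inter> F -` C = Psi X ` PP \<inter> Psi X ` {x \<in> topspace ?T. f x \<in> C}"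
      unfolding sub_topspace using Fp by auto
    ultimately show "closedin (top_of_set (Psi X ` PP)) (Psi X ` PP \<inter> F -` C)"
      by (simp add: closedin_closed_Int)
  qed
  then show "\<exists>F. continuous_on (Psi X ` PP) F \<and> (\<forall>p\<in>PP. F (Psi X p) = f p)" using Fp by blast
qed





definition IN :: "(real\<Rightarrow>real) \<Rightarrow> (real \<times> 'a::euclidean_space \<times> real) list \<Rightarrow> 'a measure \<Rightarrow> real" where
  "IN \<sigma> U p = (\<Sum>(a,w,b)\<leftarrow>U. a * (\<integral>x. \<sigma> (w \<bullet> x + b) \<partial>p))"

lemma NN_cont:
  assumes u: "continuous_on UNIV \<sigma>"
  shows "continuous_on X (NN \<sigma> U)"
proof (induction U)
  case Nil then show ?case by (simp add: NN_def)
next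
  case (Cons a U)
  obtain c w b where a: "a = (c,w,b)" by (cases a) auto
  have "continuous_on X (\<lambda>x. c * \<sigma> (w \<bullet> x + b) + NN \<sigma> U x)"
    by (intro continuous_intros continuous_on_compose2[OF u] Cons.IH) auto
  then show ?case unfolding a by (simp add: NN_def)
qed

lemma NN_integral:
  fixes X :: "'a::euclidean_space set"
  assumes X: "compact X" and u: "continuous_on UNIV \<sigma>" and p: "p \<in> borel_prob_measures X"
  shows "(\<integral>x. NN \<sigma> U x \<partial>p) = IN \<sigma> U p"
proof (induction U)
  case Nil then show ?case by (simp add: NN_def IN_def)
next
  case (Cons a U)
  obtain c w b where a: "a = (c,w,b)" by (cases a) auto
  have i1: "integrable p (\<lambda>x. \<sigma> (w \<bullet> x + b))"
    by (rule BP_int[OF X p]) (intro continuous_on_compose2[OF u] continuous_intros, auto)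
  have i2: "integrable p (NN \<sigma> U)" by (rule BP_int[OF X p NN_cont[OF u]])
  have "(\<integral>x. NN \<sigma> (a#U) x \<partial>p) = (\<integral>x. c * \<sigma> (w \<bullet> x + b) + NN \<sigma> U x \<partial>p)"
    unfolding a by (simp add: NN_def)
  also have "\<dots> = c * (\<integral>x. \<sigma> (w \<bullet> x + b) \<partial>p) + (\<integral>x. NN \<sigma> U x \<partial>p)"
    using i1 i2 by simp
  also have "\<dots> = IN \<sigma> (a#U) p" unfolding Cons a by (simp add: IN_def)
  finally show ?case .
qed

lemma abs4: "\<bar>(a::real) + b - (c + d)\<bar> \<le> \<bar>a - c\<bar> + \<bar>b - d\<bar>"
  using abs_triangle_ineq[of "a-c" "b-d"] by (simp add: algebra_simps)

lemma inner_approx: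
  fixes X :: "'a::euclidean_space set"
    and gs :: "('a \<Rightarrow> real) list"
  assumes X: "compact X" and u: "continuous_on UNIV \<sigma>" and np: "\<not> is_polynomial_fun \<sigma>"
  shows "(\<forall>g\<in>set gs. continuous_on X g) \<longrightarrow> (\<forall>\<delta>>0. \<exists>U. \<forall>p\<in>borel_prob_measures X. \<bar>(\<Sum>g\<leftarrow>gs. \<integral>x. g x \<partial>p) - IN \<sigma> U p\<bar> \<le> \<delta>)"
proof (induction gs)
  case Nil
  show ?case by (intro impI allI exI[of _ "[]"]) (simp add: IN_def)
next
  case (Cons g gs)
  show ?case
  proof (intro impI allI)
    fix \<delta> :: real assume cg: "\<forall>g\<in>set (g#gs). continuous_on X g" and d: "\<delta> > 0"
    have d2: "\<delta>/2 > 0" using d by simp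
    have gc: "continuous_on X g" using cg by simp
    have ih: "\<forall>\<delta>>0. \<exists>U. \<forall>p\<in>borel_prob_measures X. \<bar>(\<Sum>g\<leftarrow>gs. \<integral>x. g x \<partial>p) - IN \<sigma> U p\<bar> \<le> \<delta>"
      using Cons.IH cg by simp
    obtain U1 where U1: "\<forall>p\<in>borel_prob_measures X. \<bar>(\<Sum>g\<leftarrow>gs. \<integral>x. g x \<partial>p) - IN \<sigma> U1 p\<bar> \<le> \<delta>/2"
      using ih[rule_format, OF d2] by blast
    obtain U2 where U2: "\<forall>x\<in>X. \<bar>g x - NN \<sigma> U2 x\<bar> < \<delta>/2"
      using UA_d[OF X u np gc d2] by blast
    have IN_app: "IN \<sigma> (U2@U1) p = IN \<sigma> U2 p + IN \<sigma> U1 p" for p by (simp add: IN_def)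
    show "\<exists>U. \<forall>p\<in>borel_prob_measures X. \<bar>(\<Sum>g\<leftarrow>g#gs. \<integral>x. g x \<partial>p) - IN \<sigma> U p\<bar> \<le> \<delta>"
    proof (intro exI[of _ "U2@U1"] ballI)
      fix p assume p: "p \<in> borel_prob_measures X"
      have ig: "integrable p g" by (rule BP_int[OF X p gc])
      have iN: "integrable p (NN \<sigma> U2)" by (rule BP_int[OF X p NN_cont[OF u]])
      have "\<bar>(\<integral>x. g x - NN \<sigma> U2 x \<partial>p)\<bar> \<le> \<delta>/2"
        by (rule BP_bound[OF p]) (use ig iN U2 in \<open>auto simp: less_imp_le\<close>)
      then have t1: "\<bar>(\<integral>x. g x \<partial>p) - IN \<sigma> U2 p\<bar> \<le> \<delta>/2"
        using ig iN NN_integral[OF X u p, of U2] by simp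
      have t2: "\<bar>(\<Sum>g\<leftarrow>gs. \<integral>x. g x \<partial>p) - IN \<sigma> U1 p\<bar> \<le> \<delta>/2" using U1 p by blast
      show "\<bar>(\<Sum>g\<leftarrow>g#gs. \<integral>x. g x \<partial>p) - IN \<sigma> (U2@U1) p\<bar> \<le> \<delta>"
        unfolding IN_app using t1 t2 abs4[of "\<integral>x. g x \<partial>p" "\<Sum>g\<leftarrow>gs. \<integral>x. g x \<partial>p" "IN \<sigma> U2 p" "IN \<sigma> U1 p"] by simp
    qed
  qed
qed

lemma sum_bound:
  fixes X :: "'a::euclidean_space set"
    and gs :: "('a \<Rightarrow> real) list"
  assumes X: "compact X"
  shows "(\<forall>g\<in>set gs. continuous_on X g) \<longrightarrow> (\<exists>M\<ge>0. \<forall>p\<in>borel_prob_measures X. \<bar>\<Sum>g\<leftarrow>gs. \<integral>x. g x \<partial>p\<bar> \<le> M)"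
proof (induction gs)
  case Nil then show ?case by (auto intro!: exI[of _ 0])
next
  case (Cons g gs)
  show ?case
  proof
    assume cg: "\<forall>g\<in>set (g#gs). continuous_on X g"
    then obtain M where M: "M \<ge> 0" "\<forall>p\<in>borel_prob_measures X. \<bar>\<Sum>g\<leftarrow>gs. \<integral>x. g x \<partial>p\<bar> \<le> M"
      using Cons.IH by auto
    have gc: "continuous_on X g" using cg by simp
    have "bounded (g ` X)" by (rule compact_imp_bounded[OF compact_continuous_image[OF gc X]])
    then obtain B where B: "\<And>x. x \<in> X \<Longrightarrow> norm (g x) \<le> B" unfolding bounded_iff by blast
    show "\<exists>M\<ge>0. \<forall>p\<in>borel_prob_measures X. \<bar>\<Sum>g\<leftarrow>g#gs. \<integral>x. g x \<partial>p\<bar> \<le> M"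
    proof (intro exI[of _ "\<bar>B\<bar> + M"] conjI ballI)
      show "0 \<le> \<bar>B\<bar> + M" using M by simp
      fix p assume p: "p \<in> borel_prob_measures X"
      have "\<bar>\<integral>x. g x \<partial>p\<bar> \<le> \<bar>B\<bar>"
        by (rule BP_bound[OF p BP_int[OF X p gc]]) (use B in \<open>force\<close>)
      then show "\<bar>\<Sum>g\<leftarrow>g#gs. \<integral>x. g x \<partial>p\<bar> \<le> \<bar>B\<bar> + M" using M(2) p by fastforce
    qed
  qed
qed


lemma exp_lip:
  fixes Y y M :: real
  assumes "\<bar>Y\<bar> \<le> M" "\<bar>y - Y\<bar> \<le> 1"
  shows "\<bar>exp y - exp Y\<bar> \<le> exp (M+1) * \<bar>y - Y\<bar>"
proof -
  obtain \<xi> where \<xi>: "\<bar>\<xi> - Y\<bar> \<le> \<bar>y - Y\<bar>" "exp y - exp Y = (y - Y) * exp \<xi>"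
    using mvt_sym[of exp exp Y y] DERIV_exp by blast
  have "\<bar>\<xi> - Y\<bar> \<le> 1" using \<xi>(1) assms(2) by linarith
  then have "\<xi> \<le> M + 1" using assms(1) by (simp add: abs_le_iff)
  then have "exp \<xi> \<le> exp (M+1)" by simp
  then have "\<bar>y - Y\<bar> * exp \<xi> \<le> \<bar>y - Y\<bar> * exp (M+1)" by (intro mult_left_mono) auto
  then show ?thesis unfolding \<xi>(2) by (simp add: abs_mult mult.commute)
qed

lemma term_approx:
  fixes X :: "'a::euclidean_space set" and gs :: "('a \<Rightarrow> real) list"
  assumes X: "compact X" and u: "continuous_on UNIV \<sigma>" and np: "\<not> is_polynomial_fun \<sigma>"
    and cg: "\<forall>g\<in>set gs. continuous_on X g" and \<eta>: "\<eta> > 0"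
  shows "\<exists>G. isN2 \<sigma> G \<and> (\<forall>p\<in>borel_prob_measures X. \<bar>c * exp (\<Sum>g\<leftarrow>gs. \<integral>x. g x \<partial>p) - G p\<bar> \<le> \<eta>)"
proof -
  obtain M where M: "M \<ge> 0" "\<forall>p\<in>borel_prob_measures X. \<bar>\<Sum>g\<leftarrow>gs. \<integral>x. g x \<partial>p\<bar> \<le> M"
    using sum_bound[OF X, of gs] cg by blast
  define \<eta>1 where "\<eta>1 = \<eta> / (2 * (\<bar>c\<bar> + 1))"
  have \<eta>1: "\<eta>1 > 0" unfolding \<eta>1_def using \<eta> by (simp add: add_nonneg_pos)
  have M1: "M + 1 > 0" using M by simp
  obtain V where V: "\<forall>t. \<bar>t\<bar> \<le> M + 1 \<longrightarrow> \<bar>exp t - net1 \<sigma> V t\<bar> < \<eta>1"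
    using SS_D[OF exp_SS[OF u np] M1 \<eta>1] by blast
  define \<delta> where "\<delta> = min 1 (\<eta>1 / exp (M+1))"
  have \<delta>: "\<delta> > 0" "\<delta> \<le> 1" "exp (M+1) * \<delta> \<le> \<eta>1"
  proof -
    show "\<delta> > 0" unfolding \<delta>_def using \<eta>1 by simp
    show "\<delta> \<le> 1" unfolding \<delta>_def by simp
    have "exp (M+1) * \<delta> \<le> exp (M+1) * (\<eta>1 / exp (M+1))" unfolding \<delta>_def by (intro mult_left_mono) auto
    then show "exp (M+1) * \<delta> \<le> \<eta>1" by simp
  qed
  obtain U where U: "\<forall>p\<in>borel_prob_measures X. \<bar>(\<Sum>g\<leftarrow>gs. \<integral>x. g x \<partial>p) - IN \<sigma> U p\<bar> \<le> \<delta>"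
    using inner_approx[OF X u np, of gs] cg \<delta>(1) by blast
  define G where "G p = c * net1 \<sigma> V (IN \<sigma> U p)" for p :: "'a measure"
  have "isN2 \<sigma> G" unfolding G_def[abs_def] IN_def by (rule isN2_term)
  moreover have "\<bar>c * exp (\<Sum>g\<leftarrow>gs. \<integral>x. g x \<partial>p) - G p\<bar> \<le> \<eta>" if p: "p \<in> borel_prob_measures X" for p
  proof -
    define Y where "Y = (\<Sum>g\<leftarrow>gs. \<integral>x. g x \<partial>p)"
    define y where "y = IN \<sigma> U p"
    have Y: "\<bar>Y\<bar> \<le> M" unfolding Y_def using M(2) p by blast
    have yY: "\<bar>y - Y\<bar> \<le> \<delta>" unfolding Y_def y_def using U p by (simp add: abs_minus_commute)
    have y: "\<bar>y\<bar> \<le> M + 1" using Y yY \<delta>(2) by (simp add: abs_le_iff)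
    have e1: "\<bar>exp y - exp Y\<bar> \<le> \<eta>1"
    proof -
      have "\<bar>exp y - exp Y\<bar> \<le> exp (M+1) * \<bar>y - Y\<bar>" by (rule exp_lip[OF Y]) (use yY \<delta>(2) in auto)
      also have "\<dots> \<le> exp (M+1) * \<delta>" using yY by (intro mult_left_mono) auto
      finally show ?thesis using \<delta>(3) by simp
    qed
    have e2: "\<bar>exp y - net1 \<sigma> V y\<bar> < \<eta>1" using V y by blast
    have "\<bar>exp Y - net1 \<sigma> V y\<bar> \<le> 2 * \<eta>1" using e1 e2 by (simp add: abs_le_iff abs_less_iff)
    then have "\<bar>c\<bar> * \<bar>exp Y - net1 \<sigma> V y\<bar> \<le> \<bar>c\<bar> * (2 * \<eta>1)" by (intro mult_left_mono) auto
    also have "\<bar>c\<bar> * (2 * \<eta>1) = \<bar>c\<bar> * (\<eta> / (\<bar>c\<bar> + 1))" unfolding \<eta>1_def by (simp add: field_simps)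
    also have "\<dots> \<le> \<eta>" using aux_frac[of "\<bar>c\<bar>" \<eta>] \<eta> by simp
    finally have "\<bar>c\<bar> * \<bar>exp Y - net1 \<sigma> V y\<bar> \<le> \<eta>" .
    then show ?thesis unfolding G_def Y_def[symmetric] y_def[symmetric] by (simp add: abs_mult[symmetric] right_diff_distrib)
  qed
  ultimately show ?thesis by blast
qed


definition Lam :: "'a::euclidean_space set \<Rightarrow> (('a \<Rightarrow> real, real) pf \<Rightarrow> real) set" where
  "Lam X = {l. \<exists>gs. (\<forall>g\<in>set gs. continuous_on X g) \<and> l = (\<lambda>z. \<Sum>g\<leftarrow>gs. Rep_pf z g)}"

lemma Lam_cont: "continuous_on S (\<lambda>z::('a \<Rightarrow> real, real) pf. \<Sum>g\<leftarrow>gs. Rep_pf z g)"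
proof (induction gs)
  case Nil then show ?case by simp
next
  case (Cons g gs)
  have "continuous_on S (\<lambda>z::('a \<Rightarrow> real, real) pf. Rep_pf z g + (\<Sum>g\<leftarrow>gs. Rep_pf z g))"
    by (intro continuous_on_add Cons continuous_on_subset[OF Rep_pf_coord_cont]) auto
  then show ?case by simp
qed

lemma ES_approx:
  fixes X :: "'a::euclidean_space set"
  assumes X: "compact X" and u: "continuous_on UNIV \<sigma>" and np: "\<not> is_polynomial_fun \<sigma>"
    and PP: "PP \<subseteq> borel_prob_measures X"
  shows "set (map snd L) \<subseteq> Lam X \<longrightarrow> (\<forall>\<eta>>0. \<exists>G. isN2 \<sigma> G \<and> (\<forall>p\<in>PP. \<bar>ES L (Psi X p) - G p\<bar> \<le> \<eta>))"
proof (induction L)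
  case Nil
  show ?case by (intro impI allI exI[of _ "\<lambda>p. 0"]) (auto intro: isN2_const)
next
  case (Cons a L)
  show ?case
  proof (intro impI allI)
    fix \<eta> :: real assume sa: "set (map snd (a#L)) \<subseteq> Lam X" and \<eta>: "\<eta> > 0"
    obtain c l where a: "a = (c,l)" by (cases a)
    have "l \<in> Lam X" using sa a by simp
    then obtain gs where cg: "\<forall>g\<in>set gs. continuous_on X g" and l: "l = (\<lambda>z. \<Sum>g\<leftarrow>gs. Rep_pf z g)"
      unfolding Lam_def by blast
    have \<eta>2: "\<eta>/2 > 0" using \<eta> by simp
    have ih: "\<forall>\<eta>>0. \<exists>G. isN2 \<sigma> G \<and> (\<forall>p\<in>PP. \<bar>ES L (Psi X p) - G p\<bar> \<le> \<eta>)"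
      using Cons.IH sa by simp
    obtain G1 where G1: "isN2 \<sigma> G1" "\<forall>p\<in>PP. \<bar>ES L (Psi X p) - G1 p\<bar> \<le> \<eta>/2"
      using ih[rule_format, OF \<eta>2] by blast
    obtain G2 where G2: "isN2 \<sigma> G2" "\<forall>p\<in>borel_prob_measures X. \<bar>c * exp (\<Sum>g\<leftarrow>gs. \<integral>x. g x \<partial>p) - G2 p\<bar> \<le> \<eta>/2"
      using term_approx[OF X u np cg \<eta>2] by blast
    show "\<exists>G. isN2 \<sigma> G \<and> (\<forall>p\<in>PP. \<bar>ES (a#L) (Psi X p) - G p\<bar> \<le> \<eta>)"
    proof (intro exI[of _ "\<lambda>p. G2 p + G1 p"] conjI ballI)
      show "isN2 \<sigma> (\<lambda>p. G2 p + G1 p)" by (rule isN2_add[OF G2(1) G1(1)])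
      fix p assume p: "p \<in> PP"
      have "(\<Sum>g\<leftarrow>gs. Rep_pf (Psi X p) g) = (\<Sum>g\<leftarrow>gs. \<integral>x. g x \<partial>p)"
        by (rule arg_cong[where f=sum_list], rule map_cong[OF refl]) (use cg in \<open>auto simp: Rep_Psi Phi_def\<close>)
      then have lp: "l (Psi X p) = (\<Sum>g\<leftarrow>gs. \<integral>x. g x \<partial>p)" unfolding l .
      have t1: "\<bar>ES L (Psi X p) - G1 p\<bar> \<le> \<eta>/2" using G1(2) p by blast
      have t2: "\<bar>c * exp (l (Psi X p)) - G2 p\<bar> \<le> \<eta>/2" unfolding lp using G2(2) p PP by blast
      show "\<bar>ES (a#L) (Psi X p) - (G2 p + G1 p)\<bar> \<le> \<eta>"
        unfolding a ES_Cons using abs4[of "c * exp (l (Psi X p))" "ES L (Psi X p)" "G2 p" "G1 p"] t1 t2 by simp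
    qed
  qed
qed

theorem corollary1:
  fixes X :: "'a::euclidean_space set"
    and PP :: "'a measure set"
    and \<sigma> :: "real \<Rightarrow> real"
    and f :: "'a measure \<Rightarrow> real"
    and \<epsilon> :: real
  assumes "compact X"
    and "PP \<subseteq> borel_prob_measures X"
    and "compactin (weak_star_topology X) PP"
    and "continuous_on UNIV \<sigma>"
    and "\<not> is_polynomial_fun \<sigma>"
    and "continuous_map (subtopology (weak_star_topology X) PP) euclideanreal f"
    and "\<epsilon> > 0"
  shows "\<exists>(k::nat) (m::nat) (W3 :: nat \<Rightarrow> 'a) (b3 :: nat \<Rightarrow> real)
            (W2 :: nat \<Rightarrow> nat \<Rightarrow> real) (b2 :: nat \<Rightarrow> real) (w1 :: nat \<Rightarrow> real) (b1 :: real).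
           \<exists>\<delta> < \<epsilon>. \<forall>p\<in>PP.
             \<bar>f p - ((\<Sum>j<m. w1 j * \<sigma> ((\<Sum>i<k. W2 j i * (\<integral>x. \<sigma> (W3 i \<bullet> x + b3 i) \<partial>p)) + b2 j)) + b1)\<bar> \<le> \<delta>"
proof -
  note X = assms(1) and PP = assms(2) and cpt = assms(3) and u = assms(4) and np = assms(5)
    and f = assms(6) and e = assms(7)
  have K: "compact (Psi X ` PP)" by (rule factor(1)[OF PP cpt f])
  obtain F where F: "continuous_on (Psi X ` PP) F" "\<forall>p\<in>PP. F (Psi X p) = f p"
    using factor(2)[OF PP cpt f] by blast
  have e2: "\<epsilon>/2 > 0" using e by simp
  have "\<exists>L. set (map snd L) \<subseteq> Lam X \<and> (\<forall>z\<in>Psi X ` PP. \<bar>F z - ES L z\<bar> < \<epsilon>/2)"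
  proof (rule SW_exp[OF K _ _ _ _ F(1) e2])
    show "(\<lambda>x. 0) \<in> Lam X" unfolding Lam_def by (rule CollectI, rule exI[of _ "[]"]) simp
  next
    fix l m assume "l \<in> Lam X" "m \<in> Lam X"
    then obtain gs1 gs2 where "\<forall>g\<in>set gs1. continuous_on X g" "l = (\<lambda>z. \<Sum>g\<leftarrow>gs1. Rep_pf z g)"
      "\<forall>g\<in>set gs2. continuous_on X g" "m = (\<lambda>z. \<Sum>g\<leftarrow>gs2. Rep_pf z g)"
      unfolding Lam_def by blast
    then show "(\<lambda>x. l x + m x) \<in> Lam X"
      unfolding Lam_def by (intro CollectI exI[of _ "gs1@gs2"]) auto
  next
    fix l assume "l \<in> Lam X"
    then obtain gs where "l = (\<lambda>z. \<Sum>g\<leftarrow>gs. Rep_pf z g)" unfolding Lam_def by blast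
    then show "continuous_on (Psi X ` PP) l" using Lam_cont by simp
  next
    fix x y assume x: "x \<in> Psi X ` PP" and y: "y \<in> Psi X ` PP" and xy: "x \<noteq> y"
    obtain p q where pq: "x = Psi X p" "y = Psi X q" using x y by blast
    have "Phi X p \<noteq> Phi X q"
    proof
      assume "Phi X p = Phi X q"
      then have "Psi X p = Psi X q" by (simp add: Psi_def)
      then show False using xy pq by simp
    qed
    then obtain g where g: "Phi X p g \<noteq> Phi X q g" by blast
    then have gc: "continuous_on X g" unfolding Phi_def by (cases "continuous_on X g") auto
    show "\<exists>l\<in>Lam X. l x \<noteq> l y"
    proof (intro bexI)
      show "(\<lambda>z. \<Sum>g\<leftarrow>[g]. Rep_pf z g) \<in> Lam X" unfolding Lam_def using gc by (intro CollectI exI[of _ "[g]"]) auto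
      show "(\<lambda>z. \<Sum>g\<leftarrow>[g]. Rep_pf z g) x \<noteq> (\<lambda>z. \<Sum>g\<leftarrow>[g]. Rep_pf z g) y" using g pq by (simp add: Rep_Psi)
    qed
  qed
  then obtain L where L: "set (map snd L) \<subseteq> Lam X" "\<forall>z\<in>Psi X ` PP. \<bar>F z - ES L z\<bar> < \<epsilon>/2" by blast
  have e4: "\<epsilon>/4 > 0" using e by simp
  obtain G where G: "isN2 \<sigma> G" "\<forall>p\<in>PP. \<bar>ES L (Psi X p) - G p\<bar> \<le> \<epsilon>/4"
    using ES_approx[OF X u np PP, of L] L(1) e4 by blast
  obtain k m W3 b3 W2 b2 w1 b1 where Gp: "\<And>p. G p = N2 \<sigma> k m W3 b3 W2 b2 w1 b1 p"
    using G(1) unfolding isN2_def by blast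
  show ?thesis
  proof (intro exI conjI)
    show "3 * \<epsilon> / 4 < \<epsilon>" using e by simp
    show "\<forall>p\<in>PP. \<bar>f p - ((\<Sum>j<m. w1 j * \<sigma> ((\<Sum>i<k. W2 j i * (\<integral>x. \<sigma> (W3 i \<bullet> x + b3 i) \<partial>p)) + b2 j)) + b1)\<bar> \<le> 3 * \<epsilon> / 4"
    proof
      fix p assume p: "p \<in> PP"
      have t1: "\<bar>f p - ES L (Psi X p)\<bar> < \<epsilon>/2" using L(2) F(2) p by force
      have t2: "\<bar>ES L (Psi X p) - G p\<bar> \<le> \<epsilon>/4" using G(2) p by blast
      have "\<bar>f p - G p\<bar> \<le> 3 * \<epsilon> / 4"
        using abs_triangle_ineq[of "f p - ES L (Psi X p)" "ES L (Psi X p) - G p"] t1 t2 by simp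
      then show "\<bar>f p - ((\<Sum>j<m. w1 j * \<sigma> ((\<Sum>i<k. W2 j i * (\<integral>x. \<sigma> (W3 i \<bullet> x + b3 i) \<partial>p)) + b2 j)) + b1)\<bar> \<le> 3 * \<epsilon> / 4"
        using Gp[of p] unfolding N2_def by simp
    qed
  qed
qed


end
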